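(* Let $\mathcal C$ be a parsummable category and fix an injection $\phi\colon\omega\times\omega\to\omega$. Then $S_{\mathcal C}\colon\Theta(\mathcal C)\to\mathcal C$ (described below) is a well-defined functor, and it preserves sums.
   Context: Let $\omega=\{1,2,\dots\}$, $\mathbf m=\{1,\dots,m\}$, $\mathcal M$ the monoid of injections $\omega\to\omega$. A parsummable category is a small $E\mathcal M$-category (strict action of the chaotic category on $\mathcal M$; $u_*$ the action, $[v,u]\colon u_*\Rightarrow v_*$) all of whose objects have finite support (intersection of finite $A\subset\omega$ with $u_*X=X$ for all $u$ fixing $A$ pointwise), with an object $0$ of empty support and a strictly unital, associative, commutative, equivariant sum $+$ on the full subcategory $\mathcal C\boxtimes\mathcal C$ of disjointly supported pairs. For a finite set $A$, injections $\phi,\phi'\colon A\times\omega\to\omega$ and $X_\bullet=(X_a)_{a\in A}$: $\phi_*(X_\bullet)=\sum_a\phi(a,-)_*(X_a)$, $[\phi',\phi]_{X_\bullet}=\sum_a[\phi'(a,-),\phi(a,-)]_{X_a}$. $\Sigma(\mathcal C)$ is the permutative category with objects finite sequences of objects of $\mathcal C$ (unit $\epsilon$ the empty sequence), morphisms $(X_1,\dots,X_m)\to(Y_1,\dots,Y_n)$ classes $[\psi,f,\phi]$ (injections $\phi\colon\mathbf m\times\omega\to\omega$, $\psi\colon\mathbf n\times\omega\to\omega$, $f\colon\phi_*(X_\bullet)\to\psi_*(Y_\bullet)$) modulo $(\psi,f,\phi)\sim(\psi',[\psi',\psi]f[\phi,\phi'],\phi')$; every morphism has a unique representative with prescribed $\phi,\psi$;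 composition $[\rho,g,\theta][\psi,f,\phi]=[\rho,g[\theta,\psi]f,\phi]$; tensor product concatenation on objects and $[\psi,f,\phi]\otimes[\rho,g,\theta]=[\psi+\rho,f+g,\phi+\theta]$ for representatives with disjoint images ($(\phi+\theta)(i,x)=\phi(i,x)$ for $i\le m$, $\theta(i-m,x)$ otherwise); symmetry $[\bar\phi,\mathrm{id},\phi]$ with $\bar\phi(i,x)=\phi(i+m,x)$ for $i\le n$, $\phi(i-n,x)$ otherwise. For a small permutative category $\mathscr P$, $\Phi(\mathscr P)$ is the parsummable category with objects sequences $P=(P_1,P_2,\dots)$ with $P_i=\mathbf 1$ for almost all $i$, morphisms $P\to Q$ the morphisms $\bigotimes_{i\in\omega}P_i\to\bigotimes_{i\in\omega}Q_i$ in $\mathscr P$ (ordered tensor of non-unit entries), support $\{i:P_i\ne\mathbf1\}$, sum of disjointly supported objects by merging entries, and sum of morphisms $f+g$ given by $f\otimes g$ conjugated with the coherence isomorphisms associated to the tautological bijections $\mathrm{supp}(P)\amalg\mathrm{supp}(P')\to\mathrm{supp}(P)\cup\mathrm{supp}(P')$ (the disjoint union ordered with the first summand before the second). $\Theta(\mathcal C)$ is the full parsummable subcategory of $\Phi\Sigma(\mathcal C)$ on sequences each of whose entries is $\epsilon$ or a $1$-tuple. For finite $A\subset\omega$ and $X_\bullet=(X_a)_{a\in A}$ in $\mathcal C$, $\langle A,X_\bullet\rangle\in\Theta(\mathcal C)$ has $i$-th entry $(X_i)$ for $i\in A$ and $\epsilon$ otherwise; every object is uniquely of this form, $\mathrm{supp}\langle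 A,X_\bullet\rangle=A$, and $\langle A,X_\bullet\rangle+\langle B,Y_\bullet\rangle=\langle A\cup B,X_\bullet+Y_\bullet\rangle$ for $A\cap B=\varnothing$. Let $\kappa_A\colon\{1,\dots,|A|\}\to A$ be the order-preserving bijection and $\kappa_A^*X_\bullet=(X_{\kappa_A(1)},\dots,X_{\kappa_A(|A|)})$; a morphism $\langle A,X_\bullet\rangle\to\langle B,Y_\bullet\rangle$ in $\Theta(\mathcal C)$ is a morphism $\kappa_A^*X_\bullet\to\kappa_B^*Y_\bullet$ in $\Sigma(\mathcal C)$. $S_{\mathcal C}$: on objects $S_{\mathcal C}\langle A,X_\bullet\rangle=(\phi|_A)_*(X_\bullet)$, where $\phi|_A$ is the restriction of $\phi$ to $A\times\omega$; a morphism $\alpha\colon\langle A,X_\bullet\rangle\to\langle B,Y_\bullet\rangle$ has a unique representative of the form $(\phi|_B\circ(\kappa_B\times\mathrm{id}),f,\phi|_A\circ(\kappa_A\times\mathrm{id}))$ and $S_{\mathcal C}(\alpha)=f$. A functor $G$ between parsummable categories preserves sums if $G(0)=0$, $G\times G$ maps disjointly supported pairs to disjointly supported pairs, and $G$ commutes with $+$ on objects and morphisms. *)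

theory Defs
  imports Main "HOL-Library.Nat_Bijection"
begin

text \<open>Conventions: omega = {1,2,...} is modelled by the type nat (shift n |-> n-1),
  and the finite set m = {1..m} by {..<m}.  All notions are invariant under this
  order-preserving relabelling.\<close>

record ('o,'m) cat =
  Ob  :: "'o set"
  Hom :: "'o \<Rightarrow> 'o \<Rightarrow> 'm set"
  cmp :: "'m \<Rightarrow> 'm \<Rightarrow> 'm"    (* cmp g f = g o f *)
  ide :: "'o \<Rightarrow> 'm"

definition is_category :: "('o,'m,'z) cat_scheme \<Rightarrow> bool" where
  "is_category C \<longleftrightarrow>
     (\<forall>X\<in>Ob C. ide C X \<in> Hom C X X) \<and>
     (\<forall>X\<in>Ob C. \<forall>Y\<in>Ob C. \<forall>Z\<in>Ob C. \<forall>f\<in>Hom C X Y. \<forall>g\<in>Hom C Y Z.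
        cmp C g f \<in> Hom C X Z) \<and>
     (\<forall>X\<in>Ob C. \<forall>Y\<in>Ob C. \<forall>f\<in>Hom C X Y.
        cmp C (ide C Y) f = f \<and> cmp C f (ide C X) = f) \<and>
     (\<forall>W\<in>Ob C. \<forall>X\<in>Ob C. \<forall>Y\<in>Ob C. \<forall>Z\<in>Ob C.
        \<forall>f\<in>Hom C W X. \<forall>g\<in>Hom C X Y. \<forall>h\<in>Hom C Y Z.
        cmp C h (cmp C g f) = cmp C (cmp C h g) f)"

definition is_functor ::
  "('a,'b,'x) cat_scheme \<Rightarrow> ('o,'m,'z) cat_scheme \<Rightarrow> ('a \<Rightarrow> 'o) \<Rightarrow> ('b \<Rightarrow> 'm) \<Rightarrow> bool" where
  "is_functor D C F Fm \<longleftrightarrow>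
     (\<forall>X\<in>Ob D. F X \<in> Ob C) \<and>
     (\<forall>X\<in>Ob D. \<forall>Y\<in>Ob D. \<forall>f\<in>Hom D X Y. Fm f \<in> Hom C (F X) (F Y)) \<and>
     (\<forall>X\<in>Ob D. Fm (ide D X) = ide C (F X)) \<and>
     (\<forall>X\<in>Ob D. \<forall>Y\<in>Ob D. \<forall>Z\<in>Ob D. \<forall>f\<in>Hom D X Y. \<forall>g\<in>Hom D Y Z.
        Fm (cmp D g f) = cmp C (Fm g) (Fm f))"

text \<open>Categories with a zero object and a (partially defined) sum; sums are only
  meaningful on disjointly supported pairs.\<close>
record ('o,'m) sumcat = "('o,'m) cat" +
  zro :: 'o
  plO :: "'o \<Rightarrow> 'o \<Rightarrow> 'o"
  plM :: "'m \<Rightarrow> 'm \<Rightarrow> 'm"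

text \<open>E M-categories: actM v u f is the image of the morphism ((v <- u), f) of
  E M x C under the action functor; so u_* f = actM u u f and
  [v,u]_X = actM v u (ide X).\<close>
record ('o,'m) pcat = "('o,'m) sumcat" +
  actO :: "(nat \<Rightarrow> nat) \<Rightarrow> 'o \<Rightarrow> 'o"
  actM :: "(nat \<Rightarrow> nat) \<Rightarrow> (nat \<Rightarrow> nat) \<Rightarrow> 'm \<Rightarrow> 'm"

definition supported_on :: "('o,'m,'z) pcat_scheme \<Rightarrow> nat set \<Rightarrow> 'o \<Rightarrow> bool" where
  "supported_on C A X \<longleftrightarrow> (\<forall>u. inj u \<longrightarrow> (\<forall>a\<in>A. u a = a) \<longrightarrow> actO C u X = X)"

definition supp :: "('o,'m,'z) pcat_scheme \<Rightarrow> 'o \<Rightarrow> nat set" where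
  "supp C X = \<Inter>{A. finite A \<and> supported_on C A X}"

definition disj :: "('o,'m,'z) pcat_scheme \<Rightarrow> 'o \<Rightarrow> 'o \<Rightarrow> bool" where
  "disj C X Y \<longleftrightarrow> supp C X \<inter> supp C Y = {}"

definition parsummable :: "('o,'m,'z) pcat_scheme \<Rightarrow> bool" where
  "parsummable C \<longleftrightarrow>
     is_category C \<and>
     \<comment> \<open>strict action of the chaotic category E M\<close>
     (\<forall>u. inj u \<longrightarrow> (\<forall>X\<in>Ob C. actO C u X \<in> Ob C)) \<and>
     (\<forall>u v. inj u \<longrightarrow> inj v \<longrightarrow> (\<forall>X\<in>Ob C. \<forall>Y\<in>Ob C. \<forall>f\<in>Hom C X Y.
        actM C v u f \<in> Hom C (actO C u X) (actO C v Y))) \<and>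
     (\<forall>u. inj u \<longrightarrow> (\<forall>X\<in>Ob C. actM C u u (ide C X) = ide C (actO C u X))) \<and>
     (\<forall>u v w. inj u \<longrightarrow> inj v \<longrightarrow> inj w \<longrightarrow>
        (\<forall>X\<in>Ob C. \<forall>Y\<in>Ob C. \<forall>Z\<in>Ob C. \<forall>f\<in>Hom C X Y. \<forall>g\<in>Hom C Y Z.
          cmp C (actM C w v g) (actM C v u f) = actM C w u (cmp C g f))) \<and>
     (\<forall>X\<in>Ob C. actO C id X = X) \<and>
     (\<forall>X\<in>Ob C. \<forall>Y\<in>Ob C. \<forall>f\<in>Hom C X Y. actM C id id f = f) \<and>
     (\<forall>u u'. inj u \<longrightarrow> inj u' \<longrightarrow> (\<forall>X\<in>Ob C. actO C u (actO C u' X) = actO C (u \<circ> u') X)) \<and>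
     (\<forall>u u' v v'. inj u \<longrightarrow> inj u' \<longrightarrow> inj v \<longrightarrow> inj v' \<longrightarrow>
        (\<forall>X\<in>Ob C. \<forall>Y\<in>Ob C. \<forall>f\<in>Hom C X Y.
          actM C v u (actM C v' u' f) = actM C (v \<circ> v') (u \<circ> u') f)) \<and>
     \<comment> \<open>finite support\<close>
     (\<forall>X\<in>Ob C. \<exists>A. finite A \<and> supported_on C A X) \<and>
     \<comment> \<open>zero object\<close>
     zro C \<in> Ob C \<and> supp C (zro C) = {} \<and>
     \<comment> \<open>sum functor on C box C\<close>
     (\<forall>X\<in>Ob C. \<forall>Y\<in>Ob C. disj C X Y \<longrightarrow> plO C X Y \<in> Ob C) \<and>
     (\<forall>X\<in>Ob C. \<forall>Y\<in>Ob C. \<forall>X'\<in>Ob C. \<forall>Y'\<in>Ob C. \<forall>f\<in>Hom C X Y. \<forall>g\<in>Hom C X' Y'.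
        disj C X X' \<longrightarrow> disj C Y Y' \<longrightarrow> plM C f g \<in> Hom C (plO C X X') (plO C Y Y')) \<and>
     (\<forall>X\<in>Ob C. \<forall>X'\<in>Ob C. disj C X X' \<longrightarrow>
        plM C (ide C X) (ide C X') = ide C (plO C X X')) \<and>
     (\<forall>X\<in>Ob C. \<forall>Y\<in>Ob C. \<forall>Z\<in>Ob C. \<forall>X'\<in>Ob C. \<forall>Y'\<in>Ob C. \<forall>Z'\<in>Ob C.
        \<forall>f\<in>Hom C X Y. \<forall>g\<in>Hom C Y Z. \<forall>f'\<in>Hom C X' Y'. \<forall>g'\<in>Hom C Y' Z'.
        disj C X X' \<longrightarrow> disj C Y Y' \<longrightarrow> disj C Z Z' \<longrightarrow>
        plM C (cmp C g f) (cmp C g' f') = cmp C (plM C g g') (plM C f f')) \<and>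
     \<comment> \<open>strictly unital\<close>
     (\<forall>X\<in>Ob C. plO C X (zro C) = X) \<and>
     (\<forall>X\<in>Ob C. \<forall>Y\<in>Ob C. \<forall>f\<in>Hom C X Y. plM C f (ide C (zro C)) = f) \<and>
     \<comment> \<open>associative\<close>
     (\<forall>X\<in>Ob C. \<forall>Y\<in>Ob C. \<forall>Z\<in>Ob C. disj C X Y \<longrightarrow> disj C X Z \<longrightarrow> disj C Y Z \<longrightarrow>
        plO C (plO C X Y) Z = plO C X (plO C Y Z)) \<and>
     (\<forall>X\<in>Ob C. \<forall>Y\<in>Ob C. \<forall>Z\<in>Ob C. \<forall>X'\<in>Ob C. \<forall>Y'\<in>Ob C. \<forall>Z'\<in>Ob C.
        \<forall>f\<in>Hom C X X'. \<forall>g\<in>Hom C Y Y'. \<forall>h\<in>Hom C Z Z'.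
        disj C X Y \<longrightarrow> disj C X Z \<longrightarrow> disj C Y Z \<longrightarrow>
        disj C X' Y' \<longrightarrow> disj C X' Z' \<longrightarrow> disj C Y' Z' \<longrightarrow>
        plM C (plM C f g) h = plM C f (plM C g h)) \<and>
     \<comment> \<open>commutative\<close>
     (\<forall>X\<in>Ob C. \<forall>Y\<in>Ob C. disj C X Y \<longrightarrow> plO C X Y = plO C Y X) \<and>
     (\<forall>X\<in>Ob C. \<forall>Y\<in>Ob C. \<forall>X'\<in>Ob C. \<forall>Y'\<in>Ob C. \<forall>f\<in>Hom C X Y. \<forall>g\<in>Hom C X' Y'.
        disj C X X' \<longrightarrow> disj C Y Y' \<longrightarrow> plM C f g = plM C g f) \<and>
     \<comment> \<open>equivariant\<close>
     (\<forall>u. inj u \<longrightarrow> (\<forall>X\<in>Ob C. \<forall>Y\<in>Ob C. disj C X Y \<longrightarrow>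
        actO C u (plO C X Y) = plO C (actO C u X) (actO C u Y))) \<and>
     (\<forall>u v. inj u \<longrightarrow> inj v \<longrightarrow>
        (\<forall>X\<in>Ob C. \<forall>Y\<in>Ob C. \<forall>X'\<in>Ob C. \<forall>Y'\<in>Ob C. \<forall>f\<in>Hom C X Y. \<forall>g\<in>Hom C X' Y'.
        disj C X X' \<longrightarrow> disj C Y Y' \<longrightarrow>
        actM C v u (plM C f g) = plM C (actM C v u f) (actM C v u g)))"

definition preserves_sums ::
  "('a,'b,'x) sumcat_scheme \<Rightarrow> ('a \<Rightarrow> nat set) \<Rightarrow>
   ('o,'m,'z) sumcat_scheme \<Rightarrow> ('o \<Rightarrow> nat set) \<Rightarrow> ('a \<Rightarrow> 'o) \<Rightarrow> ('b \<Rightarrow> 'm) \<Rightarrow> bool" where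
  "preserves_sums D suppD C suppC G Gm \<longleftrightarrow>
     G (zro D) = zro C \<and>
     (\<forall>X\<in>Ob D. \<forall>Y\<in>Ob D. suppD X \<inter> suppD Y = {} \<longrightarrow>
        suppC (G X) \<inter> suppC (G Y) = {} \<and> G (plO D X Y) = plO C (G X) (G Y)) \<and>
     (\<forall>X\<in>Ob D. \<forall>Y\<in>Ob D. \<forall>X'\<in>Ob D. \<forall>Y'\<in>Ob D. \<forall>f\<in>Hom D X Y. \<forall>g\<in>Hom D X' Y'.
        suppD X \<inter> suppD X' = {} \<longrightarrow> suppD Y \<inter> suppD Y' = {} \<longrightarrow>
        Gm (plM D f g) = plM C (Gm f) (Gm g))"

fun sumO :: "('o,'m,'z) pcat_scheme \<Rightarrow> 'o list \<Rightarrow> 'o" where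
  "sumO C [] = zro C"
| "sumO C (x # xs) = plO C x (sumO C xs)"

fun sumM :: "('o,'m,'z) pcat_scheme \<Rightarrow> 'm list \<Rightarrow> 'm" where
  "sumM C [] = ide C (zro C)"
| "sumM C (f # fs) = plM C f (sumM C fs)"

text \<open>Injections m x omega -> omega are curried functions phi with phi i = phi(i,-).\<close>
definition inj_m :: "nat \<Rightarrow> (nat \<Rightarrow> nat \<Rightarrow> nat) \<Rightarrow> bool" where
  "inj_m m \<phi> \<longleftrightarrow> inj_on (\<lambda>(i,x). \<phi> i x) ({..<m} \<times> UNIV)"

definition img_m :: "nat \<Rightarrow> (nat \<Rightarrow> nat \<Rightarrow> nat) \<Rightarrow> nat set" where
  "img_m m \<phi> = (\<lambda>(i,x). \<phi> i x) ` ({..<m} \<times> UNIV)"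

definition pstar :: "('o,'m,'z) pcat_scheme \<Rightarrow> (nat \<Rightarrow> nat \<Rightarrow> nat) \<Rightarrow> 'o list \<Rightarrow> 'o" where
  "pstar C \<phi> Xs = sumO C (map (\<lambda>i. actO C (\<phi> i) (Xs ! i)) [0..<length Xs])"

definition brk :: "('o,'m,'z) pcat_scheme \<Rightarrow> (nat \<Rightarrow> nat \<Rightarrow> nat) \<Rightarrow> (nat \<Rightarrow> nat \<Rightarrow> nat) \<Rightarrow> 'o list \<Rightarrow> 'm" where
  "brk C \<phi>' \<phi> Xs = sumM C (map (\<lambda>i. actM C (\<phi>' i) (\<phi> i) (ide C (Xs ! i))) [0..<length Xs])"

section \<open>The permutative category Sigma(C)\<close>

type_synonym 'm srep = "(nat \<Rightarrow> nat \<Rightarrow> nat) \<times> 'm \<times> (nat \<Rightarrow> nat \<Rightarrow> nat)"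
type_synonym ('o,'m) smor = "'o list \<times> 'o list \<times> 'm srep set"

definition rep_ok :: "('o,'m,'z) pcat_scheme \<Rightarrow> 'o list \<Rightarrow> 'o list \<Rightarrow> 'm srep \<Rightarrow> bool" where
  "rep_ok C Xs Ys t \<longleftrightarrow> (case t of (\<psi>, f, \<phi>) \<Rightarrow>
     inj_m (length Xs) \<phi> \<and> inj_m (length Ys) \<psi> \<and> f \<in> Hom C (pstar C \<phi> Xs) (pstar C \<psi> Ys))"

definition srel :: "('o,'m,'z) pcat_scheme \<Rightarrow> 'o list \<Rightarrow> 'o list \<Rightarrow> 'm srep \<Rightarrow> 'm srep \<Rightarrow> bool" where
  "srel C Xs Ys t t' \<longleftrightarrow> (case t of (\<psi>, f, \<phi>) \<Rightarrow> case t' of (\<psi>', f', \<phi>') \<Rightarrow>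
     f' = cmp C (brk C \<psi>' \<psi> Ys) (cmp C f (brk C \<phi> \<phi>' Xs)))"

definition scls :: "('o,'m,'z) pcat_scheme \<Rightarrow> 'o list \<Rightarrow> 'o list \<Rightarrow> 'm srep \<Rightarrow> 'm srep set" where
  "scls C Xs Ys t = {t'. rep_ok C Xs Ys t' \<and> srel C Xs Ys t t'}"

definition SHom :: "('o,'m,'z) pcat_scheme \<Rightarrow> 'o list \<Rightarrow> 'o list \<Rightarrow> ('o,'m) smor set" where
  "SHom C Xs Ys = {(Xs, Ys, scls C Xs Ys t) | t. rep_ok C Xs Ys t}"

definition can :: "nat \<Rightarrow> nat \<Rightarrow> nat" where
  "can i x = prod_encode (i, x)"

definition sid :: "('o,'m,'z) pcat_scheme \<Rightarrow> 'o list \<Rightarrow> ('o,'m) smor" where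
  "sid C Xs = (Xs, Xs, scls C Xs Xs (can, ide C (pstar C can Xs), can))"

definition scomp :: "('o,'m,'z) pcat_scheme \<Rightarrow> ('o,'m) smor \<Rightarrow> ('o,'m) smor \<Rightarrow> ('o,'m) smor" where
  "scomp C b a = (case a of (Xs, Ys, \<alpha>) \<Rightarrow> case b of (Ys', Zs, \<beta>) \<Rightarrow>
     (case SOME t. t \<in> \<alpha> of (\<psi>, f, \<phi>) \<Rightarrow> case SOME t. t \<in> \<beta> of (\<rho>, g, \<theta>) \<Rightarrow>
       (Xs, Zs, scls C Xs Zs (\<rho>, cmp C g (cmp C (brk C \<theta> \<psi> Ys) f), \<phi>))))"

definition padd :: "nat \<Rightarrow> (nat \<Rightarrow> nat \<Rightarrow> nat) \<Rightarrow> (nat \<Rightarrow> nat \<Rightarrow> nat) \<Rightarrow> nat \<Rightarrow> nat \<Rightarrow> nat" where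
  "padd m \<phi> \<theta> = (\<lambda>i x. if i < m then \<phi> i x else \<theta> (i - m) x)"

definition stensor :: "('o,'m,'z) pcat_scheme \<Rightarrow> ('o,'m) smor \<Rightarrow> ('o,'m) smor \<Rightarrow> ('o,'m) smor" where
  "stensor C a b = (case a of (Xs, Ys, \<alpha>) \<Rightarrow> case b of (Xs', Ys', \<beta>) \<Rightarrow>
     (case SOME p. fst p \<in> \<alpha> \<and> snd p \<in> \<beta> \<and>
          (case p of ((\<psi>, f, \<phi>), (\<rho>, g, \<theta>)) \<Rightarrow>
             img_m (length Xs) \<phi> \<inter> img_m (length Xs') \<theta> = {} \<and>
             img_m (length Ys) \<psi> \<inter> img_m (length Ys') \<rho> = {}) of
      ((\<psi>, f, \<phi>), (\<rho>, g, \<theta>)) \<Rightarrow>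
        (Xs @ Xs', Ys @ Ys', scls C (Xs @ Xs') (Ys @ Ys')
           (padd (length Ys) \<psi> \<rho>, plM C f g, padd (length Xs) \<phi> \<theta>))))"

section \<open>Theta(C), the full subcategory of Phi Sigma(C)\<close>

text \<open>Objects of Phi Sigma(C) are sequences of objects of Sigma(C), i.e. of lists.\<close>
type_synonym 'o tobj = "nat \<Rightarrow> 'o list"
type_synonym ('o,'m) tmor = "'o tobj \<times> 'o tobj \<times> ('o,'m) smor"

definition tsupp :: "'o tobj \<Rightarrow> nat set" where
  "tsupp P = {i. P i \<noteq> []}"

definition theta_obj :: "('o,'m,'z) pcat_scheme \<Rightarrow> 'o tobj \<Rightarrow> bool" where
  "theta_obj C P \<longleftrightarrow> finite (tsupp P) \<and> (\<forall>i. P i = [] \<or> (\<exists>x\<in>Ob C. P i = [x]))"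

text \<open>kappa_A: order-preserving bijection {..<|A|} -> A; pos A a is its inverse\<close>
definition kappa :: "nat set \<Rightarrow> nat \<Rightarrow> nat" where
  "kappa A i = sorted_list_of_set A ! i"

definition pos :: "nat set \<Rightarrow> nat \<Rightarrow> nat" where
  "pos A a = card {b \<in> A. b < a}"

definition tens :: "'o tobj \<Rightarrow> 'o list" where
  "tens P = concat (map P (sorted_list_of_set (tsupp P)))"

definition tplO :: "'o tobj \<Rightarrow> 'o tobj \<Rightarrow> 'o tobj" where
  "tplO P Q = (\<lambda>i. P i @ Q i)"

text \<open>Coherence isomorphism in Sigma(C) associated with the tautological bijection
  supp P II supp P' -> supp P u supp P' (all blocks being 1-tuples): it is the
  permutation isomorphism [psi, id, psi o (tau x id)], where tau sends a position
  of tens P @ tens P' to the position of the same element of omega in supp P u supp P'.\<close>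
definition ttau :: "'o tobj \<Rightarrow> 'o tobj \<Rightarrow> nat \<Rightarrow> nat" where
  "ttau P P' j = pos (tsupp P \<union> tsupp P')
      ((sorted_list_of_set (tsupp P) @ sorted_list_of_set (tsupp P')) ! j)"

definition coh :: "('o,'m,'z) pcat_scheme \<Rightarrow> 'o tobj \<Rightarrow> 'o tobj \<Rightarrow> ('o,'m) smor" where
  "coh C P P' = (tens P @ tens P', tens (tplO P P'),
     scls C (tens P @ tens P') (tens (tplO P P'))
       (can, ide C (pstar C can (tens (tplO P P'))), \<lambda>j. can (ttau P P' j)))"

definition cohinv :: "('o,'m,'z) pcat_scheme \<Rightarrow> 'o tobj \<Rightarrow> 'o tobj \<Rightarrow> ('o,'m) smor" where
  "cohinv C P P' = (tens (tplO P P'), tens P @ tens P',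
     scls C (tens (tplO P P')) (tens P @ tens P')
       (\<lambda>j. can (ttau P P' j), ide C (pstar C can (tens (tplO P P'))), can))"

definition tplM :: "('o,'m,'z) pcat_scheme \<Rightarrow> ('o,'m) tmor \<Rightarrow> ('o,'m) tmor \<Rightarrow> ('o,'m) tmor" where
  "tplM C a b = (case a of (P, Q, s) \<Rightarrow> case b of (P', Q', s') \<Rightarrow>
     (tplO P P', tplO Q Q',
      scomp C (coh C Q Q') (scomp C (stensor C s s') (cohinv C P P'))))"

definition Theta :: "('o,'m,'z) pcat_scheme \<Rightarrow> ('o tobj, ('o,'m) tmor) sumcat" where
  "Theta C = \<lparr> Ob = {P. theta_obj C P},
     Hom = (\<lambda>P Q. {(P, Q, s) | s. s \<in> SHom C (tens P) (tens Q)}),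
     cmp = (\<lambda>b a. case a of (P, Q, s) \<Rightarrow> case b of (Q', R, t) \<Rightarrow> (P, R, scomp C t s)),
     ide = (\<lambda>P. (P, P, sid C (tens P))),
     zro = (\<lambda>i. []),
     plO = tplO,
     plM = tplM C \<rparr>"

definition S_obj :: "('o,'m,'z) pcat_scheme \<Rightarrow> (nat \<Rightarrow> nat \<Rightarrow> nat) \<Rightarrow> 'o tobj \<Rightarrow> 'o" where
  "S_obj C \<phi> P = sumO C (map (\<lambda>a. actO C (\<phi> a) (hd (P a))) (sorted_list_of_set (tsupp P)))"

definition S_rep_src :: "(nat \<Rightarrow> nat \<Rightarrow> nat) \<Rightarrow> 'o tobj \<Rightarrow> nat \<Rightarrow> nat \<Rightarrow> nat" where
  "S_rep_src \<phi> P = (\<lambda>i x. \<phi> (kappa (tsupp P) i) x)"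

definition S_mor :: "('o,'m,'z) pcat_scheme \<Rightarrow> (nat \<Rightarrow> nat \<Rightarrow> nat) \<Rightarrow> ('o,'m) tmor \<Rightarrow> 'm" where
  "S_mor C \<phi> a = (case a of (P, Q, (Xs, Ys, \<alpha>)) \<Rightarrow>
     THE f. (S_rep_src \<phi> Q, f, S_rep_src \<phi> P) \<in> \<alpha>)"

end

theory Submission
  imports Defs "HOL-Library.Infinite_Set"
begin


lemma inj_if2: assumes "inj_on f A" "inj g" "\<And>x a. a \<in> A \<Longrightarrow> f a \<noteq> g x"
  shows "inj (\<lambda>x. if x \<in> A then f x else g x)"
  unfolding inj_def
proof (intro allI impI)
  fix x y assume h: "(if x \<in> A then f x else g x) = (if y \<in> A then f y else g y)"
  show "x = y"
  proof (cases "x \<in> A")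
    case True
    then show ?thesis
    proof (cases "y \<in> A")
      case True with \<open>x \<in> A\<close> h assms(1) show ?thesis by (simp add: inj_on_def)
    next
      case False with \<open>x \<in> A\<close> h assms(3)[of x y] show ?thesis by simp
    qed
  next
    case False
    then show ?thesis
    proof (cases "y \<in> A")
      case True with \<open>x \<notin> A\<close> h assms(3)[of y x] show ?thesis by simp
    next
      case False with \<open>x \<notin> A\<close> h assms(2) show ?thesis by (simp add: inj_def)
    qed
  qed
qed

locale psc =
  fixes C :: "('o,'m,'z) pcat_scheme"
  assumes ps: "parsummable C"
begin

lemma ide_hom: "X \<in> Ob C \<Longrightarrow> ide C X \<in> Hom C X X"
  using ps[unfolded parsummable_def, THEN conjunct1, unfolded is_category_def, THEN conjunct1] by blast
lemma cmp_hom: "X \<in> Ob C \<Longrightarrow> Y \<in> Ob C \<Longrightarrow> Z \<in> Ob C \<Longrightarrow> f \<in> Hom C X Y \<Longrightarrow> g \<in> Hom C Y Z \<Longrightarrow> cmp C g f \<in> Hom C X Z"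
  using ps[unfolded parsummable_def, THEN conjunct1, unfolded is_category_def, THEN conjunct2, THEN conjunct1] by blast
lemma cmp_ide_l: "X \<in> Ob C \<Longrightarrow> Y \<in> Ob C \<Longrightarrow> f \<in> Hom C X Y \<Longrightarrow> cmp C (ide C Y) f = f"
  using ps[unfolded parsummable_def, THEN conjunct1, unfolded is_category_def, THEN conjunct2, THEN conjunct2, THEN conjunct1] by blast
lemma cmp_ide_r: "X \<in> Ob C \<Longrightarrow> Y \<in> Ob C \<Longrightarrow> f \<in> Hom C X Y \<Longrightarrow> cmp C f (ide C X) = f"
  using ps[unfolded parsummable_def, THEN conjunct1, unfolded is_category_def, THEN conjunct2, THEN conjunct2, THEN conjunct1] by blast
lemma cmp_assoc: "W \<in> Ob C \<Longrightarrow> X \<in> Ob C \<Longrightarrow> Y \<in> Ob C \<Longrightarrow> Z \<in> Ob C \<Longrightarrow> f \<in> Hom C W X \<Longrightarrow> g \<in> Hom C X Y \<Longrightarrow> h \<in> Hom C Y Z \<Longrightarrow>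
   cmp C h (cmp C g f) = cmp C (cmp C h g) f"
  using ps[unfolded parsummable_def, THEN conjunct1, unfolded is_category_def, THEN conjunct2, THEN conjunct2, THEN conjunct2] by blast

lemma actO_Ob: "inj u \<Longrightarrow> X \<in> Ob C \<Longrightarrow> actO C u X \<in> Ob C"
  using ps[unfolded parsummable_def, THEN conjunct2, THEN conjunct1] by blast
lemma actM_hom: "inj u \<Longrightarrow> inj v \<Longrightarrow> X \<in> Ob C \<Longrightarrow> Y \<in> Ob C \<Longrightarrow> f \<in> Hom C X Y \<Longrightarrow>
   actM C v u f \<in> Hom C (actO C u X) (actO C v Y)"
  using ps[unfolded parsummable_def, THEN conjunct2, THEN conjunct2, THEN conjunct1] by blast
lemma actM_ide: "inj u \<Longrightarrow> X \<in> Ob C \<Longrightarrow> actM C u u (ide C X) = ide C (actO C u X)"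
  using ps[unfolded parsummable_def, THEN conjunct2, THEN conjunct2, THEN conjunct2, THEN conjunct1] by blast
lemma actM_cmp: "inj u \<Longrightarrow> inj v \<Longrightarrow> inj w \<Longrightarrow> X \<in> Ob C \<Longrightarrow> Y \<in> Ob C \<Longrightarrow> Z \<in> Ob C \<Longrightarrow>
   f \<in> Hom C X Y \<Longrightarrow> g \<in> Hom C Y Z \<Longrightarrow>
   cmp C (actM C w v g) (actM C v u f) = actM C w u (cmp C g f)"
  using ps[unfolded parsummable_def, THEN conjunct2, THEN conjunct2, THEN conjunct2, THEN conjunct2, THEN conjunct1] by blast
lemma actO_comp: "inj u \<Longrightarrow> inj u' \<Longrightarrow> X \<in> Ob C \<Longrightarrow> actO C u (actO C u' X) = actO C (u \<circ> u') X"
  using ps[unfolded parsummable_def, THEN conjunct2, THEN conjunct2, THEN conjunct2, THEN conjunct2, THEN conjunct2, THEN conjunct2, THEN conjunct2, THEN conjunct1] by blast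
lemma fin_supp: "X \<in> Ob C \<Longrightarrow> \<exists>A. finite A \<and> supported_on C A X"
  using ps[unfolded parsummable_def, THEN conjunct2, THEN conjunct2, THEN conjunct2, THEN conjunct2, THEN conjunct2, THEN conjunct2, THEN conjunct2, THEN conjunct2, THEN conjunct2, THEN conjunct1] by blast
lemma zro_Ob: "zro C \<in> Ob C"
  using ps[unfolded parsummable_def, THEN conjunct2, THEN conjunct2, THEN conjunct2, THEN conjunct2, THEN conjunct2, THEN conjunct2, THEN conjunct2, THEN conjunct2, THEN conjunct2, THEN conjunct2, THEN conjunct1] by blast
lemma supp_zro: "supp C (zro C) = {}"
  using ps[unfolded parsummable_def, THEN conjunct2, THEN conjunct2, THEN conjunct2, THEN conjunct2, THEN conjunct2, THEN conjunct2, THEN conjunct2, THEN conjunct2, THEN conjunct2, THEN conjunct2, THEN conjunct2, THEN conjunct1] by blast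
lemma plO_Ob: "X \<in> Ob C \<Longrightarrow> Y \<in> Ob C \<Longrightarrow> Defs.disj C X Y \<Longrightarrow> plO C X Y \<in> Ob C"
  using ps[unfolded parsummable_def, THEN conjunct2, THEN conjunct2, THEN conjunct2, THEN conjunct2, THEN conjunct2, THEN conjunct2, THEN conjunct2, THEN conjunct2, THEN conjunct2, THEN conjunct2, THEN conjunct2, THEN conjunct2, THEN conjunct1] by blast
lemma plM_hom: "X \<in> Ob C \<Longrightarrow> Y \<in> Ob C \<Longrightarrow> X' \<in> Ob C \<Longrightarrow> Y' \<in> Ob C \<Longrightarrow> f \<in> Hom C X Y \<Longrightarrow> g \<in> Hom C X' Y' \<Longrightarrow>
   Defs.disj C X X' \<Longrightarrow> Defs.disj C Y Y' \<Longrightarrow> plM C f g \<in> Hom C (plO C X X') (plO C Y Y')"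
  using ps[unfolded parsummable_def, THEN conjunct2, THEN conjunct2, THEN conjunct2, THEN conjunct2, THEN conjunct2, THEN conjunct2, THEN conjunct2, THEN conjunct2, THEN conjunct2, THEN conjunct2, THEN conjunct2, THEN conjunct2, THEN conjunct2, THEN conjunct1] by blast
lemma plM_ide: "X \<in> Ob C \<Longrightarrow> X' \<in> Ob C \<Longrightarrow> Defs.disj C X X' \<Longrightarrow> plM C (ide C X) (ide C X') = ide C (plO C X X')"
  using ps[unfolded parsummable_def, THEN conjunct2, THEN conjunct2, THEN conjunct2, THEN conjunct2, THEN conjunct2, THEN conjunct2, THEN conjunct2, THEN conjunct2, THEN conjunct2, THEN conjunct2, THEN conjunct2, THEN conjunct2, THEN conjunct2, THEN conjunct2, THEN conjunct1] by blast
lemma plM_cmp: "X \<in> Ob C \<Longrightarrow> Y \<in> Ob C \<Longrightarrow> Z \<in> Ob C \<Longrightarrow> X' \<in> Ob C \<Longrightarrow> Y' \<in> Ob C \<Longrightarrow> Z' \<in> Ob C \<Longrightarrow>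
   f \<in> Hom C X Y \<Longrightarrow> g \<in> Hom C Y Z \<Longrightarrow> f' \<in> Hom C X' Y' \<Longrightarrow> g' \<in> Hom C Y' Z' \<Longrightarrow>
   Defs.disj C X X' \<Longrightarrow> Defs.disj C Y Y' \<Longrightarrow> Defs.disj C Z Z' \<Longrightarrow>
   plM C (cmp C g f) (cmp C g' f') = cmp C (plM C g g') (plM C f f')"
  using ps[unfolded parsummable_def, THEN conjunct2, THEN conjunct2, THEN conjunct2, THEN conjunct2, THEN conjunct2, THEN conjunct2, THEN conjunct2, THEN conjunct2, THEN conjunct2, THEN conjunct2, THEN conjunct2, THEN conjunct2, THEN conjunct2, THEN conjunct2, THEN conjunct2, THEN conjunct1] by blast
lemma plO_zro: "X \<in> Ob C \<Longrightarrow> plO C X (zro C) = X"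
  using ps[unfolded parsummable_def, THEN conjunct2, THEN conjunct2, THEN conjunct2, THEN conjunct2, THEN conjunct2, THEN conjunct2, THEN conjunct2, THEN conjunct2, THEN conjunct2, THEN conjunct2, THEN conjunct2, THEN conjunct2, THEN conjunct2, THEN conjunct2, THEN conjunct2, THEN conjunct2, THEN conjunct1] by blast
lemma plM_zro: "X \<in> Ob C \<Longrightarrow> Y \<in> Ob C \<Longrightarrow> f \<in> Hom C X Y \<Longrightarrow> plM C f (ide C (zro C)) = f"
  using ps[unfolded parsummable_def, THEN conjunct2, THEN conjunct2, THEN conjunct2, THEN conjunct2, THEN conjunct2, THEN conjunct2, THEN conjunct2, THEN conjunct2, THEN conjunct2, THEN conjunct2, THEN conjunct2, THEN conjunct2, THEN conjunct2, THEN conjunct2, THEN conjunct2, THEN conjunct2, THEN conjunct2, THEN conjunct1] by blast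
lemma plO_assoc: "X \<in> Ob C \<Longrightarrow> Y \<in> Ob C \<Longrightarrow> Z \<in> Ob C \<Longrightarrow> Defs.disj C X Y \<Longrightarrow> Defs.disj C X Z \<Longrightarrow> Defs.disj C Y Z \<Longrightarrow>
   plO C (plO C X Y) Z = plO C X (plO C Y Z)"
  using ps[unfolded parsummable_def, THEN conjunct2, THEN conjunct2, THEN conjunct2, THEN conjunct2, THEN conjunct2, THEN conjunct2, THEN conjunct2, THEN conjunct2, THEN conjunct2, THEN conjunct2, THEN conjunct2, THEN conjunct2, THEN conjunct2, THEN conjunct2, THEN conjunct2, THEN conjunct2, THEN conjunct2, THEN conjunct2, THEN conjunct1] by blast
lemma plM_assoc: "X \<in> Ob C \<Longrightarrow> Y \<in> Ob C \<Longrightarrow> Z \<in> Ob C \<Longrightarrow> X' \<in> Ob C \<Longrightarrow> Y' \<in> Ob C \<Longrightarrow> Z' \<in> Ob C \<Longrightarrow>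
   f \<in> Hom C X X' \<Longrightarrow> g \<in> Hom C Y Y' \<Longrightarrow> h \<in> Hom C Z Z' \<Longrightarrow>
   Defs.disj C X Y \<Longrightarrow> Defs.disj C X Z \<Longrightarrow> Defs.disj C Y Z \<Longrightarrow> Defs.disj C X' Y' \<Longrightarrow> Defs.disj C X' Z' \<Longrightarrow> Defs.disj C Y' Z' \<Longrightarrow>
   plM C (plM C f g) h = plM C f (plM C g h)"
  using ps[unfolded parsummable_def, THEN conjunct2, THEN conjunct2, THEN conjunct2, THEN conjunct2, THEN conjunct2, THEN conjunct2, THEN conjunct2, THEN conjunct2, THEN conjunct2, THEN conjunct2, THEN conjunct2, THEN conjunct2, THEN conjunct2, THEN conjunct2, THEN conjunct2, THEN conjunct2, THEN conjunct2, THEN conjunct2, THEN conjunct2, THEN conjunct1] by blast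
lemma plO_comm: "X \<in> Ob C \<Longrightarrow> Y \<in> Ob C \<Longrightarrow> Defs.disj C X Y \<Longrightarrow> plO C X Y = plO C Y X"
  using ps[unfolded parsummable_def, THEN conjunct2, THEN conjunct2, THEN conjunct2, THEN conjunct2, THEN conjunct2, THEN conjunct2, THEN conjunct2, THEN conjunct2, THEN conjunct2, THEN conjunct2, THEN conjunct2, THEN conjunct2, THEN conjunct2, THEN conjunct2, THEN conjunct2, THEN conjunct2, THEN conjunct2, THEN conjunct2, THEN conjunct2, THEN conjunct2, THEN conjunct1] by blast
lemma plM_comm: "X \<in> Ob C \<Longrightarrow> Y \<in> Ob C \<Longrightarrow> X' \<in> Ob C \<Longrightarrow> Y' \<in> Ob C \<Longrightarrow> f \<in> Hom C X Y \<Longrightarrow> g \<in> Hom C X' Y' \<Longrightarrow>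
   Defs.disj C X X' \<Longrightarrow> Defs.disj C Y Y' \<Longrightarrow> plM C f g = plM C g f"
  using ps[unfolded parsummable_def, THEN conjunct2, THEN conjunct2, THEN conjunct2, THEN conjunct2, THEN conjunct2, THEN conjunct2, THEN conjunct2, THEN conjunct2, THEN conjunct2, THEN conjunct2, THEN conjunct2, THEN conjunct2, THEN conjunct2, THEN conjunct2, THEN conjunct2, THEN conjunct2, THEN conjunct2, THEN conjunct2, THEN conjunct2, THEN conjunct2, THEN conjunct2, THEN conjunct1] by blast
lemma actO_plO: "inj u \<Longrightarrow> X \<in> Ob C \<Longrightarrow> Y \<in> Ob C \<Longrightarrow> Defs.disj C X Y \<Longrightarrow>
   actO C u (plO C X Y) = plO C (actO C u X) (actO C u Y)"
  using ps[unfolded parsummable_def, THEN conjunct2, THEN conjunct2, THEN conjunct2, THEN conjunct2, THEN conjunct2, THEN conjunct2, THEN conjunct2, THEN conjunct2, THEN conjunct2, THEN conjunct2, THEN conjunct2, THEN conjunct2, THEN conjunct2, THEN conjunct2, THEN conjunct2, THEN conjunct2, THEN conjunct2, THEN conjunct2, THEN conjunct2, THEN conjunct2, THEN conjunct2, THEN conjunct2, THEN conjunct1] by blast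

lemma disj_sym: "Defs.disj C X Y \<Longrightarrow> Defs.disj C Y X"
  unfolding disj_def by blast
lemma disj_zro: "Defs.disj C X (zro C)" "Defs.disj C (zro C) X"
  unfolding disj_def by (auto simp: supp_zro)

lemma plO_zro_l: "X \<in> Ob C \<Longrightarrow> plO C (zro C) X = X"
  using plO_comm[OF zro_Ob, of X] disj_zro plO_zro by simp
lemma plM_zro_l: "X \<in> Ob C \<Longrightarrow> Y \<in> Ob C \<Longrightarrow> f \<in> Hom C X Y \<Longrightarrow> plM C (ide C (zro C)) f = f"
  using plM_comm[OF zro_Ob zro_Ob, of X Y "ide C (zro C)" f] disj_zro plM_zro ide_hom zro_Ob by simp

lemma agree_inf:
  assumes X: "X \<in> Ob C" and sA: "supported_on C A X" and u: "inj u" and u': "inj u'"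
    and ag: "\<forall>a\<in>A. u a = u' a" and inf: "infinite (u ` (- A) \<inter> u' ` (- A))"
  shows "actO C u X = actO C u' X"
proof -
  define I where "I = u ` (- A) \<inter> u' ` (- A)"
  define e where "e = enumerate I"
  have eI: "e x \<in> I" for x unfolding e_def using inf I_def enumerate_in_set by blast
  have einj: "inj e" unfolding e_def using inf I_def
    by (metis inj_enumerate strict_mono_enumerate) 
  define r where "r x = (if x \<in> A then x else inv u (e x))" for x
  define r' where "r' x = (if x \<in> A then x else inv u' (e x))" for x
  have ur: "u (inv u (e x)) = e x" "inv u (e x) \<notin> A" for x
  proof -
    obtain b where "b \<notin> A" "e x = u b" using eI[of x] unfolding I_def by blast
    then show "u (inv u (e x)) = e x" "inv u (e x) \<notin> A" by (simp_all add: inv_f_f[OF u])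
  qed
  have ur': "u' (inv u' (e x)) = e x" "inv u' (e x) \<notin> A" for x
  proof -
    obtain b where "b \<notin> A" "e x = u' b" using eI[of x] unfolding I_def by blast
    then show "u' (inv u' (e x)) = e x" "inv u' (e x) \<notin> A" by (simp_all add: inv_f_f[OF u'])
  qed
  have ginj: "inj (\<lambda>x. inv u (e x))"
    by (rule injI) (metis ur(1) injD[OF einj])
  have g'inj: "inj (\<lambda>x. inv u' (e x))"
    by (rule injI) (metis ur'(1) injD[OF einj])
  have rinj: "inj r"
  proof -
    have "inj (\<lambda>x. if x \<in> A then x else inv u (e x))"
      by (rule inj_if2) (use ginj ur(2) in auto)
    then show ?thesis unfolding r_def[abs_def] .
  qed
  have r'inj: "inj r'"
  proof -
    have "inj (\<lambda>x. if x \<in> A then x else inv u' (e x))"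
      by (rule inj_if2) (use g'inj ur'(2) in auto)
    then show ?thesis unfolding r'_def[abs_def] .
  qed
  have eq: "u \<circ> r = u' \<circ> r'"
    by (rule ext) (simp add: r_def r'_def ag ur ur')
  have "\<forall>a\<in>A. r a = a" by (simp add: r_def)
  then have "actO C r X = X" using sA[unfolded supported_on_def, rule_format, OF rinj] by blast
  moreover have "\<forall>a\<in>A. r' a = a" by (simp add: r'_def)
  then have "actO C r' X = X" using sA[unfolded supported_on_def, rule_format, OF r'inj] by blast
  ultimately show ?thesis
    using actO_comp[OF u rinj X] actO_comp[OF u' r'inj X] eq by metis
qed

lemma agree:
  assumes X: "X \<in> Ob C" and fA: "finite A" and sA: "supported_on C A X" and u: "inj u" and u': "inj u'"
    and ag: "\<forall>a\<in>A. u a = u' a"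
  shows "actO C u X = actO C u' X"
proof -
  have iB: "infinite (- A)" using fA by (simp add: Compl_eq_Diff_UNIV infinite_UNIV_nat)
  define K where "K = u ` (- A) \<union> u' ` (- A)"
  have iU: "infinite (u ` (- A))" using iB u by (meson finite_imageD inj_on_subset subset_UNIV)
  have iU': "infinite (u' ` (- A))" using iB u' by (meson finite_imageD inj_on_subset subset_UNIV)
  have iK: "infinite K" unfolding K_def using iU by simp
  define w where "w x = (if x \<in> A then u x else enumerate K x)" for x
  have eK: "enumerate K x \<in> K" for x using iK enumerate_in_set by blast
  have einj: "inj (enumerate K)" using iK by (metis inj_enumerate strict_mono_enumerate)
  have uA: "u a \<notin> K" if "a \<in> A" for a
  proof
    assume "u a \<in> K"
    then consider b where "b \<notin> A" "u a = u b" | b where "b \<notin> A" "u a = u' b" unfolding K_def by blast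
    then show False
    proof cases
      case 1 then show False using injD[OF u, of a b] that by auto
    next
      case 2 then show False using injD[OF u', of a b] that ag by auto
    qed
  qed
  have winj: "inj w"
    unfolding w_def[abs_def]
    apply (rule inj_if2)
      apply (rule inj_on_subset[OF u], simp)
     apply (rule einj)
    using uA eK by metis
  have rng: "K - enumerate K ` A \<subseteq> w ` (- A)"
  proof
    fix k assume k: "k \<in> K - enumerate K ` A"
    then obtain x where "k = enumerate K x" using range_enumerate[OF iK] by blast
    with k have "x \<notin> A" by auto
    then show "k \<in> w ` (- A)" using \<open>k = enumerate K x\<close> unfolding w_def by auto
  qed
  have f1: "infinite (u ` (- A) \<inter> w ` (- A))"
  proof
    assume "finite (u ` (- A) \<inter> w ` (- A))"
    moreover have "u ` (- A) - enumerate K ` A \<subseteq> u ` (- A) \<inter> w ` (- A)" using rng K_def by auto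
    ultimately have "finite (u ` (- A) - enumerate K ` A)" by (meson finite_subset)
    then show False using iU fA by (meson finite_Diff2 finite_imageI)
  qed
  have f2: "infinite (w ` (- A) \<inter> u' ` (- A))"
  proof
    assume "finite (w ` (- A) \<inter> u' ` (- A))"
    moreover have "u' ` (- A) - enumerate K ` A \<subseteq> w ` (- A) \<inter> u' ` (- A)" using rng K_def by auto
    ultimately have "finite (u' ` (- A) - enumerate K ` A)" by (meson finite_subset)
    then show False using iU' fA by (meson finite_Diff2 finite_imageI)
  qed
  have "actO C u X = actO C w X"
    by (rule agree_inf[OF X sA u winj _ f1]) (simp add: w_def)
  also have "\<dots> = actO C u' X"
    by (rule agree_inf[OF X sA winj u' _ f2]) (simp add: w_def ag)
  finally show ?thesis .
qed

lemma supp_act: assumes X: "X \<in> Ob C" and u: "inj u" shows "supp C (actO C u X) \<subseteq> range u"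
proof -
  obtain A where fA: "finite A" and sA: "supported_on C A X" using fin_supp[OF X] by blast
  have "supported_on C (u ` A) (actO C u X)"
    unfolding supported_on_def
  proof (intro allI impI)
    fix v assume v: "inj v" and fx: "\<forall>a\<in>u ` A. v a = a"
    have "actO C v (actO C u X) = actO C (v \<circ> u) X" using actO_comp[OF v u X] .
    also have "\<dots> = actO C u X"
      by (rule agree[OF X fA sA]) (use v u fx in \<open>auto intro: inj_compose\<close>)
    finally show "actO C v (actO C u X) = actO C u X" .
  qed
  then have "supp C (actO C u X) \<subseteq> u ` A" unfolding supp_def using fA by blast
  then show ?thesis by blast
qed

lemma supp_plO: assumes X: "X \<in> Ob C" and Y: "Y \<in> Ob C" and d: "Defs.disj C X Y"
  shows "supp C (plO C X Y) \<subseteq> supp C X \<union> supp C Y"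
proof
  fix x assume x: "x \<in> supp C (plO C X Y)"
  show "x \<in> supp C X \<union> supp C Y"
  proof (rule ccontr)
    assume "x \<notin> supp C X \<union> supp C Y"
    then obtain A B where A: "finite A" "supported_on C A X" "x \<notin> A" and B: "finite B" "supported_on C B Y" "x \<notin> B"
      unfolding supp_def by blast
    have "supported_on C (A \<union> B) (plO C X Y)"
      unfolding supported_on_def
    proof (intro allI impI)
      fix v assume v: "inj v" and fx: "\<forall>a\<in>A \<union> B. v a = a"
      have "actO C v X = X" using A(2)[unfolded supported_on_def, rule_format, OF v] fx by blast
      moreover have "actO C v Y = Y" using B(2)[unfolded supported_on_def, rule_format, OF v] fx by blast
      ultimately show "actO C v (plO C X Y) = plO C X Y" using actO_plO[OF v X Y d] by simp
    qed
    then have "supp C (plO C X Y) \<subseteq> A \<union> B" unfolding supp_def using A B by blast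
    then show False using x A B by blast
  qed
qed

end


context psc begin

definition goodO :: "'i set \<Rightarrow> ('i \<Rightarrow> 'o) \<Rightarrow> bool" where
  "goodO I D \<longleftrightarrow> (\<forall>i\<in>I. D i \<in> Ob C) \<and> (\<forall>i\<in>I. \<forall>j\<in>I. i \<noteq> j \<longrightarrow> Defs.disj C (D i) (D j))"

definition goodM :: "'i set \<Rightarrow> ('i \<Rightarrow> 'o) \<Rightarrow> ('i \<Rightarrow> 'o) \<Rightarrow> ('i \<Rightarrow> 'm) \<Rightarrow> bool" where
  "goodM I D E F \<longleftrightarrow> goodO I D \<and> goodO I E \<and> (\<forall>i\<in>I. F i \<in> Hom C (D i) (E i))"

lemma goodO_Ob: "goodO I D \<Longrightarrow> i \<in> I \<Longrightarrow> D i \<in> Ob C"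
  unfolding goodO_def by blast
lemma goodO_disj: "goodO I D \<Longrightarrow> i \<in> I \<Longrightarrow> j \<in> I \<Longrightarrow> i \<noteq> j \<Longrightarrow> Defs.disj C (D i) (D j)"
  unfolding goodO_def by blast
lemma goodO_mono: "goodO I D \<Longrightarrow> J \<subseteq> I \<Longrightarrow> goodO J D"
  unfolding goodO_def by blast
lemma goodM_mono: "goodM I D E F \<Longrightarrow> J \<subseteq> I \<Longrightarrow> goodM J D E F"
  unfolding goodM_def using goodO_mono by blast

lemma sumO_Ob_supp:
  assumes g: "goodO I D" shows "set is \<subseteq> I \<Longrightarrow> distinct is \<Longrightarrow>
    sumO C (map D is) \<in> Ob C \<and> supp C (sumO C (map D is)) \<subseteq> (\<Union>i\<in>set is. supp C (D i))"
proof (induction "is")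
  case Nil then show ?case by (simp add: zro_Ob supp_zro)
next
  case (Cons i "is")
  then have IH: "sumO C (map D is) \<in> Ob C" "supp C (sumO C (map D is)) \<subseteq> (\<Union>i\<in>set is. supp C (D i))"
    by auto
  have Di: "D i \<in> Ob C" using Cons.prems g goodO_Ob by auto
  have "\<forall>j\<in>set is. supp C (D i) \<inter> supp C (D j) = {}"
    using Cons.prems goodO_disj[OF g] unfolding disj_def by auto
  then have d: "Defs.disj C (D i) (sumO C (map D is))"
    using IH(2) unfolding disj_def by blast
  show ?case using plO_Ob[OF Di IH(1) d] supp_plO[OF Di IH(1) d] IH(2) by auto
qed

lemma sumO_Ob: "goodO I D \<Longrightarrow> set is \<subseteq> I \<Longrightarrow> distinct is \<Longrightarrow> sumO C (map D is) \<in> Ob C"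
  using sumO_Ob_supp by blast
lemma sumO_supp: "goodO I D \<Longrightarrow> set is \<subseteq> I \<Longrightarrow> distinct is \<Longrightarrow> supp C (sumO C (map D is)) \<subseteq> (\<Union>i\<in>set is. supp C (D i))"
  using sumO_Ob_supp by blast

lemma sumO_disj: assumes g: "goodO I D" and "set is \<subseteq> I" "set js \<subseteq> I" "distinct is" "distinct js" "set is \<inter> set js = {}"
  shows "Defs.disj C (sumO C (map D is)) (sumO C (map D js))"
proof -
  have "\<forall>i\<in>set is. \<forall>j\<in>set js. supp C (D i) \<inter> supp C (D j) = {}"
    using assms goodO_disj[OF g] unfolding disj_def by (metis disjoint_iff subsetD)
  then show ?thesis using sumO_supp[OF g assms(2,4)] sumO_supp[OF g assms(3,5)] unfolding disj_def by blast
qed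

lemma sumO_disj1: assumes g: "goodO I D" and "i \<in> I" "set js \<subseteq> I" "distinct js" "i \<notin> set js"
  shows "Defs.disj C (D i) (sumO C (map D js))"
  using sumO_disj[OF g, of "[i]" js] assms by (simp add: plO_zro goodO_Ob)

lemma rearrO: "a \<in> Ob C \<Longrightarrow> b \<in> Ob C \<Longrightarrow> c \<in> Ob C \<Longrightarrow> Defs.disj C a b \<Longrightarrow> Defs.disj C a c \<Longrightarrow> Defs.disj C b c \<Longrightarrow>
  plO C a (plO C b c) = plO C b (plO C a c)"
  by (metis plO_assoc plO_comm disj_sym)

lemma sumO_append: assumes g: "goodO I D" shows "set is \<subseteq> I \<Longrightarrow> set js \<subseteq> I \<Longrightarrow> distinct (is @ js) \<Longrightarrow>
  sumO C (map D (is @ js)) = plO C (sumO C (map D is)) (sumO C (map D js))"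
proof (induction "is")
  case Nil then show ?case using plO_zro_l sumO_Ob[OF g] by simp
next
  case (Cons i "is")
  have Di: "D i \<in> Ob C" using Cons.prems g goodO_Ob by auto
  have s1: "sumO C (map D is) \<in> Ob C" "sumO C (map D js) \<in> Ob C" using Cons.prems sumO_Ob[OF g] by auto
  have d1: "Defs.disj C (D i) (sumO C (map D is))" "Defs.disj C (D i) (sumO C (map D js))"
    using Cons.prems sumO_disj1[OF g] by auto
  have d2: "Defs.disj C (sumO C (map D is)) (sumO C (map D js))"
    using Cons.prems sumO_disj[OF g] by auto
  show ?case using Cons plO_assoc[OF Di s1 d1 d2] by simp
qed

lemma sumO_perm: assumes g: "goodO I D" shows "set is \<subseteq> I \<Longrightarrow> distinct is \<Longrightarrow> distinct js \<Longrightarrow> set js = set is \<Longrightarrow>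
  sumO C (map D js) = sumO C (map D is)"
proof (induction "is" arbitrary: js)
  case Nil then show ?case by simp
next
  case (Cons i "is")
  then have "i \<in> set js" by auto
  then obtain js1 js2 where js: "js = js1 @ i # js2" by (meson split_list)
  have dj: "distinct (js1 @ js2)" "i \<notin> set js1" "i \<notin> set js2" "set js1 \<inter> set js2 = {}"
    using Cons.prems js by auto
  have sj: "set js1 \<subseteq> I" "set js2 \<subseteq> I" "i \<in> I" using Cons.prems js by auto
  have set12: "set (js1 @ js2) = set is" using Cons.prems js by auto
  have "sumO C (map D js) = plO C (sumO C (map D js1)) (sumO C (map D (i # js2)))"
    using sumO_append[OF g, of js1 "i # js2"] Cons.prems js sj by auto
  also have "\<dots> = plO C (D i) (plO C (sumO C (map D js1)) (sumO C (map D js2)))"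
    using rearrO[OF sumO_Ob[OF g sj(1)] goodO_Ob[OF g sj(3)] sumO_Ob[OF g sj(2)]]
      sumO_disj1[OF g sj(3) sj(1)] sumO_disj1[OF g sj(3) sj(2)] sumO_disj[OF g sj(1,2)] dj Cons.prems js
    by (simp add: disj_sym)
  also have "\<dots> = plO C (D i) (sumO C (map D (js1 @ js2)))"
    using sumO_append[OF g sj(1,2)] dj by simp
  also have "\<dots> = plO C (D i) (sumO C (map D is))"
    using Cons.IH[of "js1 @ js2"] Cons.prems dj set12 by auto
  finally show ?case by simp
qed

lemma goodM_O: "goodM I D E F \<Longrightarrow> goodO I D" "goodM I D E F \<Longrightarrow> goodO I E"
  unfolding goodM_def by auto
lemma goodM_hom: "goodM I D E F \<Longrightarrow> i \<in> I \<Longrightarrow> F i \<in> Hom C (D i) (E i)"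
  unfolding goodM_def by auto

lemma sumM_hom: assumes g: "goodM I D E F" shows "set is \<subseteq> I \<Longrightarrow> distinct is \<Longrightarrow>
  sumM C (map F is) \<in> Hom C (sumO C (map D is)) (sumO C (map E is))"
proof (induction "is")
  case Nil then show ?case by (simp add: ide_hom zro_Ob)
next
  case (Cons i "is")
  have gD: "goodO I D" and gE: "goodO I E" using g goodM_O by auto
  show ?case using plM_hom[OF goodO_Ob[OF gD] goodO_Ob[OF gE] sumO_Ob[OF gD] sumO_Ob[OF gE] goodM_hom[OF g] Cons.IH
     sumO_disj1[OF gD] sumO_disj1[OF gE]] Cons.prems by auto
qed

lemma rearrM: "a \<in> Ob C \<Longrightarrow> b \<in> Ob C \<Longrightarrow> c \<in> Ob C \<Longrightarrow> a' \<in> Ob C \<Longrightarrow> b' \<in> Ob C \<Longrightarrow> c' \<in> Ob C \<Longrightarrow>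
  f \<in> Hom C a a' \<Longrightarrow> g \<in> Hom C b b' \<Longrightarrow> h \<in> Hom C c c' \<Longrightarrow>
  Defs.disj C a b \<Longrightarrow> Defs.disj C a c \<Longrightarrow> Defs.disj C b c \<Longrightarrow>
  Defs.disj C a' b' \<Longrightarrow> Defs.disj C a' c' \<Longrightarrow> Defs.disj C b' c' \<Longrightarrow>
  plM C f (plM C g h) = plM C g (plM C f h)"
proof -
  assume a: "a \<in> Ob C" "b \<in> Ob C" "c \<in> Ob C" "a' \<in> Ob C" "b' \<in> Ob C" "c' \<in> Ob C"
    "f \<in> Hom C a a'" "g \<in> Hom C b b'" "h \<in> Hom C c c'"
    "Defs.disj C a b" "Defs.disj C a c" "Defs.disj C b c"
    "Defs.disj C a' b'" "Defs.disj C a' c'" "Defs.disj C b' c'"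
  have "plM C f (plM C g h) = plM C (plM C f g) h" using plM_assoc[of a b c a' b' c' f g h] a by simp
  also have "\<dots> = plM C (plM C g f) h" using plM_comm[of a a' b b' f g] a by simp
  also have "\<dots> = plM C g (plM C f h)" using plM_assoc[of b a c b' a' c' g f h] a by (simp add: disj_sym)
  finally show ?thesis .
qed

lemma sumM_append: assumes g: "goodM I D E F" shows "set is \<subseteq> I \<Longrightarrow> set js \<subseteq> I \<Longrightarrow> distinct (is @ js) \<Longrightarrow>
  sumM C (map F (is @ js)) = plM C (sumM C (map F is)) (sumM C (map F js))"
proof (induction "is")
  case Nil
  have gD: "goodO I D" and gE: "goodO I E" using g goodM_O by auto
  from Nil show ?case using plM_zro_l[OF sumO_Ob[OF gD] sumO_Ob[OF gE] sumM_hom[OF g]] by simp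
next
  case (Cons i "is")
  have gD: "goodO I D" and gE: "goodO I E" using g goodM_O by auto
  have i: "i \<in> I" using Cons.prems by auto
  have s: "set is \<subseteq> I" "distinct is" "distinct js" "i \<notin> set is" "i \<notin> set js" "set is \<inter> set js = {}"
    using Cons.prems by auto
  show ?case using Cons plM_assoc[OF goodO_Ob[OF gD i] sumO_Ob[OF gD s(1,2)] sumO_Ob[OF gD Cons.prems(2) s(3)]
      goodO_Ob[OF gE i] sumO_Ob[OF gE s(1,2)] sumO_Ob[OF gE Cons.prems(2) s(3)]
      goodM_hom[OF g i] sumM_hom[OF g s(1,2)] sumM_hom[OF g Cons.prems(2) s(3)]
      sumO_disj1[OF gD i s(1,2,4)] sumO_disj1[OF gD i Cons.prems(2) s(3,5)] sumO_disj[OF gD s(1) Cons.prems(2) s(2,3,6)]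
      sumO_disj1[OF gE i s(1,2,4)] sumO_disj1[OF gE i Cons.prems(2) s(3,5)] sumO_disj[OF gE s(1) Cons.prems(2) s(2,3,6)]]
    by simp
qed

lemma sumM_perm: assumes g: "goodM I D E F" shows "set is \<subseteq> I \<Longrightarrow> distinct is \<Longrightarrow> distinct js \<Longrightarrow> set js = set is \<Longrightarrow>
  sumM C (map F js) = sumM C (map F is)"
proof (induction "is" arbitrary: js)
  case Nil then show ?case by simp
next
  case (Cons i "is")
  have gD: "goodO I D" and gE: "goodO I E" using g goodM_O by auto
  from Cons have "i \<in> set js" by auto
  then obtain js1 js2 where js: "js = js1 @ i # js2" by (meson split_list)
  have dj: "distinct (js1 @ js2)" "i \<notin> set js1" "i \<notin> set js2" "set js1 \<inter> set js2 = {}" "distinct js1" "distinct js2"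
    using Cons.prems js by auto
  have sj: "set js1 \<subseteq> I" "set js2 \<subseteq> I" "i \<in> I" using Cons.prems js by auto
  have set12: "set (js1 @ js2) = set is" using Cons.prems js by auto
  have "sumM C (map F js) = plM C (sumM C (map F js1)) (sumM C (map F (i # js2)))"
    using sumM_append[OF g, of js1 "i # js2"] Cons.prems js sj by auto
  also have "\<dots> = plM C (F i) (plM C (sumM C (map F js1)) (sumM C (map F js2)))"
    using rearrM[OF sumO_Ob[OF gD sj(1) dj(5)] goodO_Ob[OF gD sj(3)] sumO_Ob[OF gD sj(2) dj(6)]
        sumO_Ob[OF gE sj(1) dj(5)] goodO_Ob[OF gE sj(3)] sumO_Ob[OF gE sj(2) dj(6)]
        sumM_hom[OF g sj(1) dj(5)] goodM_hom[OF g sj(3)] sumM_hom[OF g sj(2) dj(6)]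
        disj_sym[OF sumO_disj1[OF gD sj(3) sj(1) dj(5,2)]] sumO_disj[OF gD sj(1,2) dj(5,6,4)] sumO_disj1[OF gD sj(3) sj(2) dj(6,3)]
        disj_sym[OF sumO_disj1[OF gE sj(3) sj(1) dj(5,2)]] sumO_disj[OF gE sj(1,2) dj(5,6,4)] sumO_disj1[OF gE sj(3) sj(2) dj(6,3)]]
    by simp
  also have "\<dots> = plM C (F i) (sumM C (map F (js1 @ js2)))"
    using sumM_append[OF g sj(1,2)] dj by simp
  also have "\<dots> = plM C (F i) (sumM C (map F is))"
    using Cons.IH[of "js1 @ js2"] Cons.prems dj set12 by auto
  finally show ?case by simp
qed

lemma sumM_ide: assumes g: "goodO I D" shows "set is \<subseteq> I \<Longrightarrow> distinct is \<Longrightarrow>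
  sumM C (map (\<lambda>i. ide C (D i)) is) = ide C (sumO C (map D is))"
proof (induction "is")
  case Nil then show ?case by simp
next
  case (Cons i "is")
  then show ?case using plM_ide[OF goodO_Ob[OF g] sumO_Ob[OF g] sumO_disj1[OF g]] by auto
qed

lemma sumM_cmp: assumes g1: "goodM I D E F" and g2: "goodM I E H G" shows "set is \<subseteq> I \<Longrightarrow> distinct is \<Longrightarrow>
  sumM C (map (\<lambda>i. cmp C (G i) (F i)) is) = cmp C (sumM C (map G is)) (sumM C (map F is))"
proof (induction "is")
  case Nil then show ?case using cmp_ide_l[OF zro_Ob zro_Ob ide_hom[OF zro_Ob]] by simp
next
  case (Cons i "is")
  have gD: "goodO I D" and gE: "goodO I E" and gH: "goodO I H" using g1 g2 goodM_O by auto
  have i: "i \<in> I" and s: "set is \<subseteq> I" "distinct is" "i \<notin> set is" using Cons.prems by auto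
  show ?case using Cons plM_cmp[OF goodO_Ob[OF gD i] goodO_Ob[OF gE i] goodO_Ob[OF gH i]
     sumO_Ob[OF gD s(1,2)] sumO_Ob[OF gE s(1,2)] sumO_Ob[OF gH s(1,2)]
     goodM_hom[OF g1 i] goodM_hom[OF g2 i] sumM_hom[OF g1 s(1,2)] sumM_hom[OF g2 s(1,2)]
     sumO_disj1[OF gD i s] sumO_disj1[OF gE i s] sumO_disj1[OF gH i s]] by simp
qed

end


lemma inj_m_inj: assumes "inj_m L \<psi>" "i < L" shows "inj (\<psi> i)"
proof (rule injI)
  fix x y assume "\<psi> i x = \<psi> i y"
  then show "x = y" using inj_onD[OF assms(1)[unfolded inj_m_def], of "(i, x)" "(i, y)"] assms(2) by simp
qed

lemma inj_m_disj: assumes "inj_m L \<psi>" "i < L" "j < L" "i \<noteq> j" shows "range (\<psi> i) \<inter> range (\<psi> j) = {}"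
proof (rule ccontr)
  assume "range (\<psi> i) \<inter> range (\<psi> j) \<noteq> {}"
  then obtain x y where "\<psi> i x = \<psi> j y" by (metis disjoint_iff rangeE)
  then show False using inj_onD[OF assms(1)[unfolded inj_m_def], of "(i, x)" "(j, y)"] assms(2-4) by simp
qed

context psc begin

lemma supp_act_disj: "X \<in> Ob C \<Longrightarrow> Y \<in> Ob C \<Longrightarrow> inj u \<Longrightarrow> inj v \<Longrightarrow> range u \<inter> range v = {} \<Longrightarrow>
   Defs.disj C (actO C u X) (actO C v Y)"
proof -
  assume a: "X \<in> Ob C" "Y \<in> Ob C" "inj u" "inj v" "range u \<inter> range v = {}"
  show ?thesis unfolding disj_def using supp_act[OF a(1,3)] supp_act[OF a(2,4)] a(5) by blast
qed

lemma good_piece: assumes "inj_m L \<psi>" "length Xs = L" "set Xs \<subseteq> Ob C"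
  shows "goodO {0..<L} (\<lambda>i. actO C (\<psi> i) (Xs ! i))"
  unfolding goodO_def
proof (intro conjI ballI impI)
  fix i assume "i \<in> {0..<L}"
  then have i: "i < L" by simp
  then have X: "Xs ! i \<in> Ob C" using assms(2,3) by auto
  show "actO C (\<psi> i) (Xs ! i) \<in> Ob C" by (rule actO_Ob[OF inj_m_inj[OF assms(1) i] X])
next
  fix i j assume "i \<in> {0..<L}" "j \<in> {0..<L}" "i \<noteq> j"
  then show "Defs.disj C (actO C (\<psi> i) (Xs ! i)) (actO C (\<psi> j) (Xs ! j))"
  proof -
    assume ij: "i \<in> {0..<L}" "j \<in> {0..<L}" "i \<noteq> j"
    then have X: "Xs ! i \<in> Ob C" "Xs ! j \<in> Ob C" using assms(2,3) by auto
    show ?thesis using ij by (intro supp_act_disj[OF X] inj_m_inj[OF assms(1)] inj_m_disj[OF assms(1)]) auto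
  qed
qed

lemma good_brk: assumes "inj_m L \<psi>" "inj_m L \<psi>'" "length Xs = L" "set Xs \<subseteq> Ob C"
  shows "goodM {0..<L} (\<lambda>i. actO C (\<psi> i) (Xs ! i)) (\<lambda>i. actO C (\<psi>' i) (Xs ! i))
     (\<lambda>i. actM C (\<psi>' i) (\<psi> i) (ide C (Xs ! i)))"
  unfolding goodM_def
proof (intro conjI ballI)
  fix i assume "i \<in> {0..<L}"
  then have i: "i < L" by simp
  then have X: "Xs ! i \<in> Ob C" using assms(3,4) by auto
  show "actM C (\<psi>' i) (\<psi> i) (ide C (Xs ! i)) \<in> Hom C (actO C (\<psi> i) (Xs ! i)) (actO C (\<psi>' i) (Xs ! i))"
    by (rule actM_hom[OF inj_m_inj[OF assms(1) i] inj_m_inj[OF assms(2) i] X X ide_hom[OF X]])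
qed (fact good_piece[OF assms(1,3,4)] good_piece[OF assms(2,3,4)])+

lemma pstar_Ob: "inj_m (length Xs) \<psi> \<Longrightarrow> set Xs \<subseteq> Ob C \<Longrightarrow> pstar C \<psi> Xs \<in> Ob C"
  unfolding pstar_def using sumO_Ob[OF good_piece] by simp

lemma pstar_supp: assumes "inj_m (length Xs) \<psi>" "set Xs \<subseteq> Ob C"
  shows "supp C (pstar C \<psi> Xs) \<subseteq> img_m (length Xs) \<psi>"
proof -
  have "supp C (pstar C \<psi> Xs) \<subseteq> (\<Union>i\<in>{0..<length Xs}. supp C (actO C (\<psi> i) (Xs ! i)))"
    unfolding pstar_def using sumO_supp[OF good_piece[OF assms(1) refl assms(2)], of "[0..<length Xs]"] by simp
  also have "\<dots> \<subseteq> (\<Union>i\<in>{0..<length Xs}. range (\<psi> i))"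
  proof (rule UN_mono[OF subset_refl])
    fix i assume "i \<in> {0..<length Xs}"
    then have i: "i < length Xs" by simp
    then have X: "Xs ! i \<in> Ob C" using assms(2) by auto
    show "supp C (actO C (\<psi> i) (Xs ! i)) \<subseteq> range (\<psi> i)" by (rule supp_act[OF X inj_m_inj[OF assms(1) i]])
  qed
  also have "\<dots> = img_m (length Xs) \<psi>" unfolding img_m_def by auto
  finally show ?thesis .
qed

lemma brk_hom: "inj_m (length Xs) \<psi> \<Longrightarrow> inj_m (length Xs) \<psi>' \<Longrightarrow> set Xs \<subseteq> Ob C \<Longrightarrow>
  brk C \<psi>' \<psi> Xs \<in> Hom C (pstar C \<psi> Xs) (pstar C \<psi>' Xs)"
  unfolding pstar_def brk_def using sumM_hom[OF good_brk] by simp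

lemma brk_cmp: assumes "inj_m (length Xs) \<phi>" "inj_m (length Xs) \<psi>" "inj_m (length Xs) \<theta>" "set Xs \<subseteq> Ob C"
  shows "cmp C (brk C \<theta> \<psi> Xs) (brk C \<psi> \<phi> Xs) = brk C \<theta> \<phi> Xs"
proof -
  have "brk C \<theta> \<phi> Xs = sumM C (map (\<lambda>i. cmp C (actM C (\<theta> i) (\<psi> i) (ide C (Xs ! i))) (actM C (\<psi> i) (\<phi> i) (ide C (Xs ! i)))) [0..<length Xs])"
    unfolding brk_def
  proof (rule arg_cong[where f="sumM C"], rule map_cong[OF refl])
    fix i assume "i \<in> set [0..<length Xs]"
    then have i: "i < length Xs" by simp
    then have X: "Xs ! i \<in> Ob C" using assms(4) by auto
    show "actM C (\<theta> i) (\<phi> i) (ide C (Xs ! i)) = cmp C (actM C (\<theta> i) (\<psi> i) (ide C (Xs ! i))) (actM C (\<psi> i) (\<phi> i) (ide C (Xs ! i)))"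
      using actM_cmp[OF inj_m_inj[OF assms(1) i] inj_m_inj[OF assms(2) i] inj_m_inj[OF assms(3) i] X X X ide_hom[OF X] ide_hom[OF X]]
        cmp_ide_l[OF X X ide_hom[OF X]] by simp
  qed
  also have "\<dots> = cmp C (brk C \<theta> \<psi> Xs) (brk C \<psi> \<phi> Xs)"
    unfolding brk_def using sumM_cmp[OF good_brk[OF assms(1,2) refl assms(4)] good_brk[OF assms(2,3) refl assms(4)]] by simp
  finally show ?thesis by simp
qed

lemma brk_id: assumes "inj_m (length Xs) \<phi>" "set Xs \<subseteq> Ob C"
  shows "brk C \<phi> \<phi> Xs = ide C (pstar C \<phi> Xs)"
proof -
  have "brk C \<phi> \<phi> Xs = sumM C (map (\<lambda>i. ide C (actO C (\<phi> i) (Xs ! i))) [0..<length Xs])"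
    unfolding brk_def
  proof (rule arg_cong[where f="sumM C"], rule map_cong[OF refl])
    fix i assume "i \<in> set [0..<length Xs]"
    then have i: "i < length Xs" by simp
    then have X: "Xs ! i \<in> Ob C" using assms(2) by auto
    show "actM C (\<phi> i) (\<phi> i) (ide C (Xs ! i)) = ide C (actO C (\<phi> i) (Xs ! i))"
      by (rule actM_ide[OF inj_m_inj[OF assms(1) i] X])
  qed
  also have "\<dots> = ide C (pstar C \<phi> Xs)"
    unfolding pstar_def using sumM_ide[OF good_piece[OF assms(1) refl assms(2)]] by simp
  finally show ?thesis .
qed

end


context psc begin

lemma rep_okD: "rep_ok C Xs Ys (\<psi>, f, \<phi>) \<Longrightarrow> inj_m (length Xs) \<phi> \<and> inj_m (length Ys) \<psi> \<and> f \<in> Hom C (pstar C \<phi> Xs) (pstar C \<psi> Ys)"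
  unfolding rep_ok_def by simp

lemma rep_okI: "inj_m (length Xs) \<phi> \<Longrightarrow> inj_m (length Ys) \<psi> \<Longrightarrow> f \<in> Hom C (pstar C \<phi> Xs) (pstar C \<psi> Ys) \<Longrightarrow> rep_ok C Xs Ys (\<psi>, f, \<phi>)"
  unfolding rep_ok_def by simp

lemma srel_iff: "srel C Xs Ys (\<psi>, f, \<phi>) (\<psi>', f', \<phi>') \<longleftrightarrow> f' = cmp C (brk C \<psi>' \<psi> Ys) (cmp C f (brk C \<phi> \<phi>' Xs))"
  unfolding srel_def by simp

lemma sandwich_hom:
  assumes ok: "set Xs \<subseteq> Ob C" "set Ys \<subseteq> Ob C"
    and r: "rep_ok C Xs Ys (\<psi>, f, \<phi>)" and i: "inj_m (length Xs) \<phi>'" "inj_m (length Ys) \<psi>'"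
  shows "cmp C (brk C \<psi>' \<psi> Ys) (cmp C f (brk C \<phi> \<phi>' Xs)) \<in> Hom C (pstar C \<phi>' Xs) (pstar C \<psi>' Ys)"
proof -
  have r': "inj_m (length Xs) \<phi>" "inj_m (length Ys) \<psi>" "f \<in> Hom C (pstar C \<phi> Xs) (pstar C \<psi> Ys)"
    using rep_okD[OF r] by auto
  note O = pstar_Ob[OF r'(1) ok(1)] pstar_Ob[OF r'(2) ok(2)] pstar_Ob[OF i(1) ok(1)] pstar_Ob[OF i(2) ok(2)]
  show ?thesis
    by (rule cmp_hom[OF O(3) O(2) O(4) cmp_hom[OF O(3) O(1) O(2) brk_hom[OF i(1) r'(1) ok(1)] r'(3)] brk_hom[OF r'(2) i(2) ok(2)]])
qed

lemma srel_compose: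
  assumes ok: "set Xs \<subseteq> Ob C" "set Ys \<subseteq> Ob C"
    and r: "rep_ok C Xs Ys (\<psi>0, f0, \<phi>0)"
    and i: "inj_m (length Xs) \<phi>1" "inj_m (length Ys) \<psi>1" "inj_m (length Xs) \<phi>2" "inj_m (length Ys) \<psi>2"
  shows "cmp C (brk C \<psi>2 \<psi>1 Ys) (cmp C (cmp C (brk C \<psi>1 \<psi>0 Ys) (cmp C f0 (brk C \<phi>0 \<phi>1 Xs))) (brk C \<phi>1 \<phi>2 Xs))
       = cmp C (brk C \<psi>2 \<psi>0 Ys) (cmp C f0 (brk C \<phi>0 \<phi>2 Xs))"
proof -
  have r': "inj_m (length Xs) \<phi>0" "inj_m (length Ys) \<psi>0" "f0 \<in> Hom C (pstar C \<phi>0 Xs) (pstar C \<psi>0 Ys)"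
    using rep_okD[OF r] by auto
  note A0 = pstar_Ob[OF r'(1) ok(1)] and B0 = pstar_Ob[OF r'(2) ok(2)]
  note A1 = pstar_Ob[OF i(1) ok(1)] and B1 = pstar_Ob[OF i(2) ok(2)]
  note A2 = pstar_Ob[OF i(3) ok(1)] and B2 = pstar_Ob[OF i(4) ok(2)]
  note a01 = brk_hom[OF i(1) r'(1) ok(1)] and a12 = brk_hom[OF i(3) i(1) ok(1)]
  note b10 = brk_hom[OF r'(2) i(2) ok(2)] and b21 = brk_hom[OF i(2) i(4) ok(2)]
  have fa: "cmp C f0 (brk C \<phi>0 \<phi>1 Xs) \<in> Hom C (pstar C \<phi>1 Xs) (pstar C \<psi>0 Ys)"
    by (rule cmp_hom[OF A1 A0 B0 a01 r'(3)])
  have "cmp C (cmp C (brk C \<psi>1 \<psi>0 Ys) (cmp C f0 (brk C \<phi>0 \<phi>1 Xs))) (brk C \<phi>1 \<phi>2 Xs)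
      = cmp C (brk C \<psi>1 \<psi>0 Ys) (cmp C (cmp C f0 (brk C \<phi>0 \<phi>1 Xs)) (brk C \<phi>1 \<phi>2 Xs))"
    by (rule cmp_assoc[OF A2 A1 B0 B1 a12 fa b10, symmetric])
  also have "cmp C (cmp C f0 (brk C \<phi>0 \<phi>1 Xs)) (brk C \<phi>1 \<phi>2 Xs) = cmp C f0 (cmp C (brk C \<phi>0 \<phi>1 Xs) (brk C \<phi>1 \<phi>2 Xs))"
    by (rule cmp_assoc[OF A2 A1 A0 B0 a12 a01 r'(3), symmetric])
  also have "cmp C (brk C \<phi>0 \<phi>1 Xs) (brk C \<phi>1 \<phi>2 Xs) = brk C \<phi>0 \<phi>2 Xs"
    by (rule brk_cmp[OF i(3) i(1) r'(1) ok(1)])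
  finally have e1: "cmp C (cmp C (brk C \<psi>1 \<psi>0 Ys) (cmp C f0 (brk C \<phi>0 \<phi>1 Xs))) (brk C \<phi>1 \<phi>2 Xs)
      = cmp C (brk C \<psi>1 \<psi>0 Ys) (cmp C f0 (brk C \<phi>0 \<phi>2 Xs))" .
  have fa2: "cmp C f0 (brk C \<phi>0 \<phi>2 Xs) \<in> Hom C (pstar C \<phi>2 Xs) (pstar C \<psi>0 Ys)"
    by (rule cmp_hom[OF A2 A0 B0 brk_hom[OF i(3) r'(1) ok(1)] r'(3)])
  have "cmp C (brk C \<psi>2 \<psi>1 Ys) (cmp C (brk C \<psi>1 \<psi>0 Ys) (cmp C f0 (brk C \<phi>0 \<phi>2 Xs)))
     = cmp C (cmp C (brk C \<psi>2 \<psi>1 Ys) (brk C \<psi>1 \<psi>0 Ys)) (cmp C f0 (brk C \<phi>0 \<phi>2 Xs))"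
    by (rule cmp_assoc[OF A2 B0 B1 B2 fa2 b10 b21])
  also have "cmp C (brk C \<psi>2 \<psi>1 Ys) (brk C \<psi>1 \<psi>0 Ys) = brk C \<psi>2 \<psi>0 Ys"
    by (rule brk_cmp[OF r'(2) i(2) i(4) ok(2)])
  finally show ?thesis using e1 by simp
qed

lemma srel_refl: assumes ok: "set Xs \<subseteq> Ob C" "set Ys \<subseteq> Ob C" and r: "rep_ok C Xs Ys t" shows "srel C Xs Ys t t"
proof -
  obtain \<psi> f \<phi> where t: "t = (\<psi>, f, \<phi>)" by (cases t) auto
  have r': "inj_m (length Xs) \<phi>" "inj_m (length Ys) \<psi>" "f \<in> Hom C (pstar C \<phi> Xs) (pstar C \<psi> Ys)"
    using rep_okD r t by auto
  note A = pstar_Ob[OF r'(1) ok(1)] and B = pstar_Ob[OF r'(2) ok(2)]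
  show ?thesis unfolding t srel_iff brk_id[OF r'(1) ok(1)] brk_id[OF r'(2) ok(2)]
    using cmp_ide_r[OF A B r'(3)] cmp_ide_l[OF A B r'(3)] by simp
qed

lemma scls_self: "set Xs \<subseteq> Ob C \<Longrightarrow> set Ys \<subseteq> Ob C \<Longrightarrow> rep_ok C Xs Ys t \<Longrightarrow> t \<in> scls C Xs Ys t"
  unfolding scls_def using srel_refl by blast

lemma scls_repr:
  assumes ok: "set Xs \<subseteq> Ob C" "set Ys \<subseteq> Ob C" and r: "rep_ok C Xs Ys (\<psi>0, f0, \<phi>0)"
    and i: "inj_m (length Xs) \<phi>" "inj_m (length Ys) \<psi>"
  shows "(\<psi>, cmp C (brk C \<psi> \<psi>0 Ys) (cmp C f0 (brk C \<phi>0 \<phi> Xs)), \<phi>) \<in> scls C Xs Ys (\<psi>0, f0, \<phi>0)"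
  unfolding scls_def using sandwich_hom[OF ok r i] i by (auto simp: srel_iff intro!: rep_okI)

lemma scls_srel:
  assumes ok: "set Xs \<subseteq> Ob C" "set Ys \<subseteq> Ob C" and r: "rep_ok C Xs Ys t0"
    and t1: "t1 \<in> scls C Xs Ys t0" and t2: "t2 \<in> scls C Xs Ys t0"
  shows "srel C Xs Ys t1 t2"
proof -
  obtain \<psi>0 f0 \<phi>0 where e0: "t0 = (\<psi>0, f0, \<phi>0)" by (cases t0) auto
  obtain \<psi>1 f1 \<phi>1 where e1: "t1 = (\<psi>1, f1, \<phi>1)" by (cases t1) auto
  obtain \<psi>2 f2 \<phi>2 where e2: "t2 = (\<psi>2, f2, \<phi>2)" by (cases t2) auto
  have h1: "rep_ok C Xs Ys (\<psi>1, f1, \<phi>1)" "f1 = cmp C (brk C \<psi>1 \<psi>0 Ys) (cmp C f0 (brk C \<phi>0 \<phi>1 Xs))"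
    using t1 unfolding e0 e1 scls_def by (auto simp: srel_iff)
  have h2: "rep_ok C Xs Ys (\<psi>2, f2, \<phi>2)" "f2 = cmp C (brk C \<psi>2 \<psi>0 Ys) (cmp C f0 (brk C \<phi>0 \<phi>2 Xs))"
    using t2 unfolding e0 e2 scls_def by (auto simp: srel_iff)
  show ?thesis unfolding e1 e2 srel_iff h2(2) h1(2)
    using srel_compose[OF ok r[unfolded e0]] rep_okD[OF h1(1)] rep_okD[OF h2(1)] by simp
qed

lemma scls_eq:
  assumes ok: "set Xs \<subseteq> Ob C" "set Ys \<subseteq> Ob C" and r: "rep_ok C Xs Ys t0"
    and t1: "t1 \<in> scls C Xs Ys t0"
  shows "scls C Xs Ys t1 = scls C Xs Ys t0"
proof
  show "scls C Xs Ys t0 \<subseteq> scls C Xs Ys t1"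
    using scls_srel[OF ok r t1] unfolding scls_def by blast
next
  show "scls C Xs Ys t1 \<subseteq> scls C Xs Ys t0"
  proof
    fix t assume t: "t \<in> scls C Xs Ys t1"
    obtain \<psi>0 f0 \<phi>0 where e0: "t0 = (\<psi>0, f0, \<phi>0)" by (cases t0) auto
    obtain \<psi>1 f1 \<phi>1 where e1: "t1 = (\<psi>1, f1, \<phi>1)" by (cases t1) auto
    obtain \<psi> f \<phi> where e: "t = (\<psi>, f, \<phi>)" by (cases t) auto
    have h1: "rep_ok C Xs Ys (\<psi>1, f1, \<phi>1)" "f1 = cmp C (brk C \<psi>1 \<psi>0 Ys) (cmp C f0 (brk C \<phi>0 \<phi>1 Xs))"
      using t1 unfolding e0 e1 scls_def by (auto simp: srel_iff)
    have h: "rep_ok C Xs Ys (\<psi>, f, \<phi>)" "f = cmp C (brk C \<psi> \<psi>1 Ys) (cmp C f1 (brk C \<phi>1 \<phi> Xs))"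
      using t unfolding e e1 scls_def by (auto simp: srel_iff)
    have "f = cmp C (brk C \<psi> \<psi>0 Ys) (cmp C f0 (brk C \<phi>0 \<phi> Xs))"
      unfolding h(2) h1(2) using srel_compose[OF ok r[unfolded e0]] rep_okD[OF h1(1)] rep_okD[OF h(1)] by simp
    then show "t \<in> scls C Xs Ys t0" unfolding e e0 scls_def using h(1) by (simp add: srel_iff)
  qed
qed

lemma scls_unique:
  "(\<psi>, f, \<phi>) \<in> scls C Xs Ys t0 \<Longrightarrow> (\<psi>, f', \<phi>) \<in> scls C Xs Ys t0 \<Longrightarrow> f = f'"
  unfolding scls_def by (cases t0) (auto simp: srel_iff)

lemma scls_ex1:
  assumes ok: "set Xs \<subseteq> Ob C" "set Ys \<subseteq> Ob C" and r: "rep_ok C Xs Ys t0"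
    and i: "inj_m (length Xs) \<phi>" "inj_m (length Ys) \<psi>"
  shows "\<exists>!f. (\<psi>, f, \<phi>) \<in> scls C Xs Ys t0"
proof -
  obtain \<psi>0 f0 \<phi>0 where e0: "t0 = (\<psi>0, f0, \<phi>0)" by (cases t0) auto
  show ?thesis using scls_repr[OF ok r[unfolded e0] i] scls_unique unfolding e0 by blast
qed

lemma scls_the:
  assumes "(\<psi>, f, \<phi>) \<in> scls C Xs Ys t0" shows "(THE f. (\<psi>, f, \<phi>) \<in> scls C Xs Ys t0) = f"
  using assms scls_unique by blast

end


context psc begin

lemma comp_hom_rep:
  assumes ok: "set Xs \<subseteq> Ob C" "set Ys \<subseteq> Ob C" "set Zs \<subseteq> Ob C"
    and r1: "rep_ok C Xs Ys (\<psi>, f, \<phi>)" and r2: "rep_ok C Ys Zs (\<rho>, g, \<theta>)"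
  shows "rep_ok C Xs Zs (\<rho>, cmp C g (cmp C (brk C \<theta> \<psi> Ys) f), \<phi>)"
proof -
  note a = rep_okD[OF r1] and b = rep_okD[OF r2]
  note O = pstar_Ob[OF conjunct1[OF a] ok(1)] pstar_Ob[OF conjunct1[OF conjunct2[OF a]] ok(2)]
     pstar_Ob[OF conjunct1[OF b] ok(2)] pstar_Ob[OF conjunct1[OF conjunct2[OF b]] ok(3)]
  show ?thesis
    by (rule rep_okI) (use a b in \<open>auto intro!: cmp_hom[OF O(1) O(3) O(4)] cmp_hom[OF O(1) O(2) O(3)] brk_hom ok\<close>)
qed

lemma scomp_eq:
  assumes ok: "set Xs \<subseteq> Ob C" "set Ys \<subseteq> Ob C" "set Zs \<subseteq> Ob C"
    and r1: "rep_ok C Xs Ys t1" and r2: "rep_ok C Ys Zs t2"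
    and m1: "(\<psi>, f, \<phi>) \<in> scls C Xs Ys t1" and m2: "(\<rho>, g, \<theta>) \<in> scls C Ys Zs t2"
  shows "scomp C (Ys, Zs, scls C Ys Zs t2) (Xs, Ys, scls C Xs Ys t1)
       = (Xs, Zs, scls C Xs Zs (\<rho>, cmp C g (cmp C (brk C \<theta> \<psi> Ys) f), \<phi>))"
proof -
  have s1: "(SOME t. t \<in> scls C Xs Ys t1) \<in> scls C Xs Ys t1" using scls_self[OF ok(1,2) r1] by (rule someI)
  have s2: "(SOME t. t \<in> scls C Ys Zs t2) \<in> scls C Ys Zs t2" using scls_self[OF ok(2,3) r2] by (rule someI)
  obtain \<psi>1 f1 \<phi>1 where e1: "(SOME t. t \<in> scls C Xs Ys t1) = (\<psi>1, f1, \<phi>1)" by (metis prod_cases3)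
  obtain \<rho>1 g1 \<theta>1 where e2: "(SOME t. t \<in> scls C Ys Zs t2) = (\<rho>1, g1, \<theta>1)" by (metis prod_cases3)
  have sc: "scomp C (Ys, Zs, scls C Ys Zs t2) (Xs, Ys, scls C Xs Ys t1)
       = (Xs, Zs, scls C Xs Zs (\<rho>1, cmp C g1 (cmp C (brk C \<theta>1 \<psi>1 Ys) f1), \<phi>1))"
    unfolding scomp_def by (simp add: e1 e2)
  have m1': "(\<psi>1, f1, \<phi>1) \<in> scls C Xs Ys t1" using s1 e1 by simp
  have m2': "(\<rho>1, g1, \<theta>1) \<in> scls C Ys Zs t2" using s2 e2 by simp
  have ro1: "rep_ok C Xs Ys (\<psi>1, f1, \<phi>1)" "rep_ok C Xs Ys (\<psi>, f, \<phi>)" using m1 m1' unfolding scls_def by auto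
  have ro2: "rep_ok C Ys Zs (\<rho>1, g1, \<theta>1)" "rep_ok C Ys Zs (\<rho>, g, \<theta>)" using m2 m2' unfolding scls_def by auto
  have ef: "f = cmp C (brk C \<psi> \<psi>1 Ys) (cmp C f1 (brk C \<phi>1 \<phi> Xs))"
    using scls_srel[OF ok(1,2) r1 m1' m1] by (simp add: srel_iff)
  have eg: "g = cmp C (brk C \<rho> \<rho>1 Zs) (cmp C g1 (brk C \<theta>1 \<theta> Ys))"
    using scls_srel[OF ok(2,3) r2 m2' m2] by (simp add: srel_iff)
  note a1 = rep_okD[OF ro1(1)] and a = rep_okD[OF ro1(2)] and b1 = rep_okD[OF ro2(1)] and b = rep_okD[OF ro2(2)]
  have i: "inj_m (length Xs) \<phi>" "inj_m (length Xs) \<phi>1" "inj_m (length Ys) \<psi>" "inj_m (length Ys) \<psi>1"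
     "inj_m (length Ys) \<theta>" "inj_m (length Ys) \<theta>1" "inj_m (length Zs) \<rho>" "inj_m (length Zs) \<rho>1"
    using a1 a b1 b by auto
  have hf1: "f1 \<in> Hom C (pstar C \<phi>1 Xs) (pstar C \<psi>1 Ys)" and hg1: "g1 \<in> Hom C (pstar C \<theta>1 Ys) (pstar C \<rho>1 Zs)"
    using a1 b1 by auto
  note A = pstar_Ob[OF i(1) ok(1)] and A1 = pstar_Ob[OF i(2) ok(1)] and B = pstar_Ob[OF i(3) ok(2)]
    and B1 = pstar_Ob[OF i(4) ok(2)] and T = pstar_Ob[OF i(5) ok(2)] and T1 = pstar_Ob[OF i(6) ok(2)]
    and D = pstar_Ob[OF i(7) ok(3)] and D1 = pstar_Ob[OF i(8) ok(3)]
  define p where "p = brk C \<phi>1 \<phi> Xs"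
  define X where "X = cmp C f1 p"
  define u where "u = brk C \<psi> \<psi>1 Ys"
  define v where "v = brk C \<theta> \<psi> Ys"
  define w where "w = brk C \<theta> \<psi>1 Ys"
  define x where "x = brk C \<theta>1 \<theta> Ys"
  define y where "y = brk C \<theta>1 \<psi>1 Ys"
  define z where "z = brk C \<rho> \<rho>1 Zs"
  have hp: "p \<in> Hom C (pstar C \<phi> Xs) (pstar C \<phi>1 Xs)" unfolding p_def by (rule brk_hom[OF i(1,2) ok(1)])
  have hX: "X \<in> Hom C (pstar C \<phi> Xs) (pstar C \<psi>1 Ys)" unfolding X_def by (rule cmp_hom[OF A A1 B1 hp hf1])
  have hu: "u \<in> Hom C (pstar C \<psi>1 Ys) (pstar C \<psi> Ys)" unfolding u_def by (rule brk_hom[OF i(4,3) ok(2)])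
  have hv: "v \<in> Hom C (pstar C \<psi> Ys) (pstar C \<theta> Ys)" unfolding v_def by (rule brk_hom[OF i(3,5) ok(2)])
  have hw: "w \<in> Hom C (pstar C \<psi>1 Ys) (pstar C \<theta> Ys)" unfolding w_def by (rule brk_hom[OF i(4,5) ok(2)])
  have hx: "x \<in> Hom C (pstar C \<theta> Ys) (pstar C \<theta>1 Ys)" unfolding x_def by (rule brk_hom[OF i(5,6) ok(2)])
  have hy: "y \<in> Hom C (pstar C \<psi>1 Ys) (pstar C \<theta>1 Ys)" unfolding y_def by (rule brk_hom[OF i(4,6) ok(2)])
  have hz: "z \<in> Hom C (pstar C \<rho>1 Zs) (pstar C \<rho> Zs)" unfolding z_def by (rule brk_hom[OF i(8,7) ok(3)])
  have vu: "cmp C v u = w" unfolding v_def u_def w_def by (rule brk_cmp[OF i(4,3,5) ok(2)])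
  have xw: "cmp C x w = y" unfolding x_def w_def y_def by (rule brk_cmp[OF i(4,5,6) ok(2)])
  have hwX: "cmp C w X \<in> Hom C (pstar C \<phi> Xs) (pstar C \<theta> Ys)" by (rule cmp_hom[OF A B1 T hX hw])
  have hg1x: "cmp C g1 x \<in> Hom C (pstar C \<theta> Ys) (pstar C \<rho>1 Zs)" by (rule cmp_hom[OF T T1 D1 hx hg1])
  have hyf1: "cmp C y f1 \<in> Hom C (pstar C \<phi>1 Xs) (pstar C \<theta>1 Ys)" by (rule cmp_hom[OF A1 B1 T1 hf1 hy])
  have "cmp C v (cmp C u X) = cmp C (cmp C v u) X" by (rule cmp_assoc[OF A B1 B T hX hu hv])
  then have s1: "cmp C v (cmp C u X) = cmp C w X" using vu by simp
  have s2: "cmp C (cmp C z (cmp C g1 x)) (cmp C w X) = cmp C z (cmp C (cmp C g1 x) (cmp C w X))"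
    by (rule cmp_assoc[OF A T D1 D hwX hg1x hz, symmetric])
  have s3: "cmp C (cmp C g1 x) (cmp C w X) = cmp C g1 (cmp C x (cmp C w X))"
    by (rule cmp_assoc[OF A T T1 D1 hwX hx hg1, symmetric])
  have "cmp C x (cmp C w X) = cmp C (cmp C x w) X" by (rule cmp_assoc[OF A B1 T T1 hX hw hx])
  then have s4: "cmp C x (cmp C w X) = cmp C y X" using xw by simp
  have s5: "cmp C (cmp C g1 (cmp C y f1)) p = cmp C g1 (cmp C (cmp C y f1) p)"
    by (rule cmp_assoc[OF A A1 T1 D1 hp hyf1 hg1, symmetric])
  have s6: "cmp C (cmp C y f1) p = cmp C y X" unfolding X_def
    by (rule cmp_assoc[OF A A1 B1 T1 hp hf1 hy, symmetric])
  have key: "cmp C g (cmp C v f) = cmp C z (cmp C (cmp C g1 (cmp C y f1)) p)"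
    unfolding eg ef using s1 s2 s3 s4 s5 s6 unfolding X_def[symmetric] u_def[symmetric] p_def[symmetric] z_def[symmetric] x_def[symmetric]
    by (simp add: X_def)
  have rc1: "rep_ok C Xs Zs (\<rho>1, cmp C g1 (cmp C (brk C \<theta>1 \<psi>1 Ys) f1), \<phi>1)" by (rule comp_hom_rep[OF ok ro1(1) ro2(1)])
  have rc: "rep_ok C Xs Zs (\<rho>, cmp C g (cmp C (brk C \<theta> \<psi> Ys) f), \<phi>)" by (rule comp_hom_rep[OF ok ro1(2) ro2(2)])
  have mem: "(\<rho>, cmp C g (cmp C (brk C \<theta> \<psi> Ys) f), \<phi>) \<in> scls C Xs Zs (\<rho>1, cmp C g1 (cmp C (brk C \<theta>1 \<psi>1 Ys) f1), \<phi>1)"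
    unfolding scls_def using rc key by (simp add: srel_iff v_def y_def z_def p_def)
  show ?thesis unfolding sc using scls_eq[OF ok(1,3) rc1 mem] by simp
qed

end


lemma Theta_simps:
  "Ob (Theta C) = {P. theta_obj C P}"
  "Hom (Theta C) P Q = {(P, Q, s) | s. s \<in> SHom C (tens P) (tens Q)}"
  "cmp (Theta C) b a = (case a of (P, Q, s) \<Rightarrow> case b of (Q', R, t) \<Rightarrow> (P, R, scomp C t s))"
  "ide (Theta C) P = (P, P, sid C (tens P))"
  "zro (Theta C) = (\<lambda>i. [])"
  "plO (Theta C) = tplO"
  "plM (Theta C) = tplM C"
  unfolding Theta_def by simp_all

lemma concat_singletons: "(\<forall>a\<in>set L. P a = [g a]) \<Longrightarrow> concat (map P L) = map g L"
  by (induction L) auto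

lemma map_as_nth: "map f xs = map (\<lambda>i. f (xs ! i)) [0..<length xs]"
  by (rule nth_equalityI) auto

lemma theta_fin: "theta_obj C P \<Longrightarrow> finite (tsupp P)"
  unfolding theta_obj_def by simp

lemma theta_entry: "theta_obj C P \<Longrightarrow> a \<in> tsupp P \<Longrightarrow> P a = [hd (P a)] \<and> hd (P a) \<in> Ob C"
proof -
  assume a: "theta_obj C P" "a \<in> tsupp P"
  then have "P a \<noteq> []" unfolding tsupp_def by simp
  then obtain x where "x \<in> Ob C" "P a = [x]" using a(1) unfolding theta_obj_def by blast
  then show ?thesis by simp
qed

lemma tens_eq: "theta_obj C P \<Longrightarrow> tens P = map (\<lambda>a. hd (P a)) (sorted_list_of_set (tsupp P))"
proof -
  assume P: "theta_obj C P"
  show ?thesis unfolding tens_def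
  proof (rule concat_singletons, intro ballI)
    fix a assume "a \<in> set (sorted_list_of_set (tsupp P))"
    then have "a \<in> tsupp P" using theta_fin[OF P] by simp
    then show "P a = [hd (P a)]" using theta_entry[OF P] by blast
  qed
qed

lemma tens_len: assumes P: "theta_obj C P" shows "length (tens P) = card (tsupp P)"
  using tens_eq[OF P] theta_fin[OF P] by simp

lemma tens_Ob: "theta_obj C P \<Longrightarrow> set (tens P) \<subseteq> Ob C"
proof
  fix x assume P: "theta_obj C P" and x: "x \<in> set (tens P)"
  then obtain a where "a \<in> tsupp P" "x = hd (P a)" using tens_eq[OF P] theta_fin[OF P] by auto
  then show "x \<in> Ob C" using theta_entry[OF P] by blast
qed

lemma tens_nth: assumes P: "theta_obj C P" and i: "i < card (tsupp P)" shows "tens P ! i = hd (P (kappa (tsupp P) i))"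
  using tens_eq[OF P] theta_fin[OF P] i unfolding kappa_def by simp

lemma kappa_inj: "finite A \<Longrightarrow> i < card A \<Longrightarrow> j < card A \<Longrightarrow> kappa A i = kappa A j \<Longrightarrow> i = j"
  unfolding kappa_def using nth_eq_iff_index_eq[of "sorted_list_of_set A"] by simp

lemma kappa_in: "finite A \<Longrightarrow> i < card A \<Longrightarrow> kappa A i \<in> A"
  unfolding kappa_def by (metis length_sorted_list_of_set nth_mem set_sorted_list_of_set)

lemma inj_m_S:
  assumes phi: "inj (\<lambda>(i, x). \<phi> i x)" and fin: "finite A" shows "inj_m (card A) (\<lambda>i x. \<phi> (kappa A i) x)"
  unfolding inj_m_def
proof (rule inj_onI)
  fix p q assume p: "p \<in> {..<card A} \<times> UNIV" and q: "q \<in> {..<card A} \<times> UNIV"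
    and e: "(\<lambda>(i, x). \<phi> (kappa A i) x) p = (\<lambda>(i, x). \<phi> (kappa A i) x) q"
  obtain i x j y where pq: "p = (i, x)" "q = (j, y)" by (cases p, cases q) auto
  have "(kappa A i, x) = (kappa A j, y)" using injD[OF phi, of "(kappa A i, x)" "(kappa A j, y)"] e pq by simp
  then show "p = q" using kappa_inj[OF fin, of i j] p q pq by auto
qed

lemma inj_m_Srep: "inj (\<lambda>(i, x). \<phi> i x) \<Longrightarrow> theta_obj C P \<Longrightarrow> inj_m (length (tens P)) (S_rep_src \<phi> P)"
proof -
  assume a: "inj (\<lambda>(i, x). \<phi> i x)" "theta_obj C P"
  show ?thesis unfolding S_rep_src_def tens_len[OF a(2)] by (rule inj_m_S[OF a(1) theta_fin[OF a(2)]])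
qed

lemma inj_m_can: "inj_m L can"
  unfolding inj_m_def can_def inj_on_def using prod_encode_eq by auto

context psc begin

lemma pstar_S: assumes "theta_obj C P"
  shows "pstar C (S_rep_src \<phi> P) (tens P) = S_obj C \<phi> P"
proof -
  have "S_obj C \<phi> P = sumO C (map (\<lambda>i. actO C (\<phi> (sorted_list_of_set (tsupp P) ! i)) (hd (P (sorted_list_of_set (tsupp P) ! i))))
     [0..<length (sorted_list_of_set (tsupp P))])"
    unfolding S_obj_def by (subst map_as_nth) simp
  also have "\<dots> = pstar C (S_rep_src \<phi> P) (tens P)"
    unfolding pstar_def S_rep_src_def
    using tens_len[OF assms] tens_nth[OF assms] theta_fin[OF assms]
    by (intro arg_cong[where f="sumO C"] map_cong) (auto simp: kappa_def)
  finally show ?thesis by simp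
qed

lemma S_obj_Ob: "inj (\<lambda>(i, x). \<phi> i x) \<Longrightarrow> theta_obj C P \<Longrightarrow> S_obj C \<phi> P \<in> Ob C"
proof -
  assume a: "inj (\<lambda>(i, x). \<phi> i x)" "theta_obj C P"
  show ?thesis using pstar_Ob[OF inj_m_Srep[OF a] tens_Ob[OF a(2)]] unfolding pstar_S[OF a(2)] .
qed

lemma HomTheta: assumes "a \<in> Hom (Theta C) P Q"
  obtains t where "a = (P, Q, tens P, tens Q, scls C (tens P) (tens Q) t)" "rep_ok C (tens P) (tens Q) t"
proof -
  from assms obtain s where "a = (P, Q, s)" "s \<in> SHom C (tens P) (tens Q)" unfolding Theta_simps by blast
  then show ?thesis using that unfolding SHom_def by blast
qed

lemma S_mor_eq:
  assumes phi: "inj (\<lambda>(i, x). \<phi> i x)" and P: "theta_obj C P" and Q: "theta_obj C Q"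
    and r: "rep_ok C (tens P) (tens Q) t" and m: "(S_rep_src \<phi> Q, h, S_rep_src \<phi> P) \<in> scls C (tens P) (tens Q) t"
  shows "S_mor C \<phi> (P, Q, tens P, tens Q, scls C (tens P) (tens Q) t) = h"
  unfolding S_mor_def using scls_the[OF m] by simp

lemma S_mor_mem:
  assumes phi: "inj (\<lambda>(i, x). \<phi> i x)" and P: "theta_obj C P" and Q: "theta_obj C Q"
    and r: "rep_ok C (tens P) (tens Q) t"
  shows "(S_rep_src \<phi> Q, S_mor C \<phi> (P, Q, tens P, tens Q, scls C (tens P) (tens Q) t), S_rep_src \<phi> P) \<in> scls C (tens P) (tens Q) t"
proof -
  obtain h where "(S_rep_src \<phi> Q, h, S_rep_src \<phi> P) \<in> scls C (tens P) (tens Q) t"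
    using scls_ex1[OF tens_Ob[OF P] tens_Ob[OF Q] r inj_m_Srep[OF phi P] inj_m_Srep[OF phi Q]] by blast
  then show ?thesis using S_mor_eq[OF phi P Q r] by simp
qed

lemma part1:
  assumes phi: "inj (\<lambda>(i, x). \<phi> i x)"
  shows "\<forall>P\<in>Ob (Theta C). \<forall>Q\<in>Ob (Theta C). \<forall>a\<in>Hom (Theta C) P Q.
            case a of (P, Q, (Xs, Ys, \<alpha>)) \<Rightarrow>
              \<exists>!f. (S_rep_src \<phi> Q, f, S_rep_src \<phi> P) \<in> \<alpha>"
proof (intro ballI)
  fix P Q a assume P: "P \<in> Ob (Theta C)" and Q: "Q \<in> Ob (Theta C)" and a: "a \<in> Hom (Theta C) P Q"
  obtain t where e: "a = (P, Q, tens P, tens Q, scls C (tens P) (tens Q) t)" and r: "rep_ok C (tens P) (tens Q) t"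
    using HomTheta[OF a] by blast
  have P': "theta_obj C P" and Q': "theta_obj C Q" using P Q unfolding Theta_simps by auto
  show "case a of (P, Q, (Xs, Ys, \<alpha>)) \<Rightarrow> \<exists>!f. (S_rep_src \<phi> Q, f, S_rep_src \<phi> P) \<in> \<alpha>"
    unfolding e using scls_ex1[OF tens_Ob[OF P'] tens_Ob[OF Q'] r inj_m_Srep[OF phi P'] inj_m_Srep[OF phi Q']] by simp
qed

lemma part2:
  assumes phi: "inj (\<lambda>(i, x). \<phi> i x)"
  shows "is_functor (Theta C) C (S_obj C \<phi>) (S_mor C \<phi>)"
  unfolding is_functor_def
proof (intro conjI ballI)
  fix P assume "P \<in> Ob (Theta C)"
  then have P: "theta_obj C P" unfolding Theta_simps by simp
  then show "S_obj C \<phi> P \<in> Ob C" by (rule S_obj_Ob[OF phi])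
  let ?s = "S_rep_src \<phi> P" and ?X = "tens P"
  note ok = tens_Ob[OF P] and iS = inj_m_Srep[OF phi P]
  have rc: "rep_ok C ?X ?X (can, ide C (pstar C can ?X), can)"
    by (rule rep_okI[OF inj_m_can inj_m_can ide_hom[OF pstar_Ob[OF inj_m_can ok]]])
  have O1: "pstar C can ?X \<in> Ob C" "pstar C ?s ?X \<in> Ob C" using pstar_Ob[OF inj_m_can ok] pstar_Ob[OF iS ok] by auto
  have "cmp C (brk C ?s can ?X) (cmp C (ide C (pstar C can ?X)) (brk C can ?s ?X)) = ide C (pstar C ?s ?X)"
    using cmp_ide_l[OF O1(2) O1(1) brk_hom[OF iS inj_m_can ok]] brk_cmp[OF iS inj_m_can iS ok] brk_id[OF iS ok] by simp
  then have "(?s, ide C (pstar C ?s ?X), ?s) \<in> scls C ?X ?X (can, ide C (pstar C can ?X), can)"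
    unfolding scls_def using ide_hom[OF O1(2)] iS by (auto simp: srel_iff intro!: rep_okI)
  then show "S_mor C \<phi> (ide (Theta C) P) = ide C (S_obj C \<phi> P)"
    unfolding Theta_simps sid_def using S_mor_eq[OF phi P P rc] pstar_S[OF P] by simp
next
  fix P Q a assume P: "P \<in> Ob (Theta C)" and Q: "Q \<in> Ob (Theta C)" and a: "a \<in> Hom (Theta C) P Q"
  obtain t where e: "a = (P, Q, tens P, tens Q, scls C (tens P) (tens Q) t)" and r: "rep_ok C (tens P) (tens Q) t"
    using HomTheta[OF a] by blast
  have P': "theta_obj C P" and Q': "theta_obj C Q" using P Q unfolding Theta_simps by auto
  have "rep_ok C (tens P) (tens Q) (S_rep_src \<phi> Q, S_mor C \<phi> a, S_rep_src \<phi> P)"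
    using S_mor_mem[OF phi P' Q' r] unfolding e scls_def by simp
  then show "S_mor C \<phi> a \<in> Hom C (S_obj C \<phi> P) (S_obj C \<phi> Q)"
    using rep_okD[of "tens P" "tens Q" "S_rep_src \<phi> Q" "S_mor C \<phi> a" "S_rep_src \<phi> P"] unfolding pstar_S[OF P'] pstar_S[OF Q'] by blast
next
  fix P Q R a b assume P: "P \<in> Ob (Theta C)" and Q: "Q \<in> Ob (Theta C)" and R: "R \<in> Ob (Theta C)"
    and a: "a \<in> Hom (Theta C) P Q" and b: "b \<in> Hom (Theta C) Q R"
  obtain t1 where e1: "a = (P, Q, tens P, tens Q, scls C (tens P) (tens Q) t1)" and r1: "rep_ok C (tens P) (tens Q) t1"
    using HomTheta[OF a] by blast
  obtain t2 where e2: "b = (Q, R, tens Q, tens R, scls C (tens Q) (tens R) t2)" and r2: "rep_ok C (tens Q) (tens R) t2"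
    using HomTheta[OF b] by blast
  have P': "theta_obj C P" and Q': "theta_obj C Q" and R': "theta_obj C R" using P Q R unfolding Theta_simps by auto
  note ok = tens_Ob[OF P'] tens_Ob[OF Q'] tens_Ob[OF R']
  note iP = inj_m_Srep[OF phi P'] and iQ = inj_m_Srep[OF phi Q'] and iR = inj_m_Srep[OF phi R']
  define f where "f = S_mor C \<phi> a"
  define g where "g = S_mor C \<phi> b"
  have m1: "(S_rep_src \<phi> Q, f, S_rep_src \<phi> P) \<in> scls C (tens P) (tens Q) t1"
    unfolding f_def e1 by (rule S_mor_mem[OF phi P' Q' r1])
  have m2: "(S_rep_src \<phi> R, g, S_rep_src \<phi> Q) \<in> scls C (tens Q) (tens R) t2"
    unfolding g_def e2 by (rule S_mor_mem[OF phi Q' R' r2])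
  have ro1: "rep_ok C (tens P) (tens Q) (S_rep_src \<phi> Q, f, S_rep_src \<phi> P)" using m1 unfolding scls_def by simp
  have ro2: "rep_ok C (tens Q) (tens R) (S_rep_src \<phi> R, g, S_rep_src \<phi> Q)" using m2 unfolding scls_def by simp
  have hf: "f \<in> Hom C (pstar C (S_rep_src \<phi> P) (tens P)) (pstar C (S_rep_src \<phi> Q) (tens Q))" using rep_okD[OF ro1] by simp
  have sc: "cmp (Theta C) b a = (P, R, tens P, tens R, scls C (tens P) (tens R)
       (S_rep_src \<phi> R, cmp C g (cmp C (brk C (S_rep_src \<phi> Q) (S_rep_src \<phi> Q) (tens Q)) f), S_rep_src \<phi> P))"
    unfolding Theta_simps e1 e2 using scomp_eq[OF ok r1 r2 m1 m2] by simp
  have rc: "rep_ok C (tens P) (tens R) (S_rep_src \<phi> R, cmp C g (cmp C (brk C (S_rep_src \<phi> Q) (S_rep_src \<phi> Q) (tens Q)) f), S_rep_src \<phi> P)"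
    by (rule comp_hom_rep[OF ok ro1 ro2])
  have "cmp C (brk C (S_rep_src \<phi> Q) (S_rep_src \<phi> Q) (tens Q)) f = f"
    using brk_id[OF iQ ok(2)] cmp_ide_l[OF pstar_Ob[OF iP ok(1)] pstar_Ob[OF iQ ok(2)] hf] by simp
  then show "S_mor C \<phi> (cmp (Theta C) b a) = cmp C (S_mor C \<phi> b) (S_mor C \<phi> a)"
    unfolding sc f_def[symmetric] g_def[symmetric] using S_mor_eq[OF phi P' R' rc scls_self[OF ok(1,3) rc]] by simp
qed

end


lemma inj_m_cong: assumes "\<forall>i<L. \<psi>1 i = \<psi>2 i" "inj_m L \<psi>1" shows "inj_m L \<psi>2"
proof -
  have "inj_on (\<lambda>(i, x). \<psi>1 i x) ({..<L} \<times> UNIV) = inj_on (\<lambda>(i, x). \<psi>2 i x) ({..<L} \<times> UNIV)"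
    by (rule inj_on_cong) (use assms(1) in auto)
  then show ?thesis using assms(2) unfolding inj_m_def by simp
qed

lemma perm_upt: assumes "\<forall>j<N. \<mu> j < N" "inj_on \<mu> {0..<N}"
  shows "distinct (map \<mu> [0..<N])" "set (map \<mu> [0..<N]) = {0..<N}"
proof -
  show "distinct (map \<mu> [0..<N])" using assms(2) by (simp add: distinct_map)
  have sub: "\<mu> ` {0..<N} \<subseteq> {0..<N}" using assms(1) by auto
  have "card (\<mu> ` {0..<N}) = card {0..<N}" using card_image[OF assms(2)] by simp
  then have "\<mu> ` {0..<N} = {0..<N}" using card_subset_eq[OF _ sub] by blast
  then show "set (map \<mu> [0..<N]) = {0..<N}" by simp
qed

lemma padd_inj: assumes "inj_m m \<phi>" "inj_m m' \<theta>" "img_m m \<phi> \<inter> img_m m' \<theta> = {}"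
  shows "inj_m (m + m') (padd m \<phi> \<theta>)"
  unfolding inj_m_def
proof (rule inj_onI)
  fix p q assume p: "p \<in> {..<m + m'} \<times> UNIV" and q: "q \<in> {..<m + m'} \<times> UNIV"
    and e: "(\<lambda>(i, x). padd m \<phi> \<theta> i x) p = (\<lambda>(i, x). padd m \<phi> \<theta> i x) q"
  obtain i x j y where pq: "p = (i, x)" "q = (j, y)" by (cases p, cases q) auto
  have e': "padd m \<phi> \<theta> i x = padd m \<phi> \<theta> j y" using e pq by simp
  show "p = q"
  proof (cases "i < m")
    case True
    show ?thesis
    proof (cases "j < m")
      case True
      with \<open>i < m\<close> e' have "\<phi> i x = \<phi> j y" by (simp add: padd_def)
      then show ?thesis using inj_onD[OF assms(1)[unfolded inj_m_def], of "(i,x)" "(j,y)"] \<open>i < m\<close> True pq by simp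
    next
      case False
      with \<open>i < m\<close> e' have "\<phi> i x = \<theta> (j - m) y" by (simp add: padd_def)
      moreover have "\<phi> i x \<in> img_m m \<phi>" using \<open>i < m\<close> unfolding img_m_def by force
      moreover have "\<theta> (j - m) y \<in> img_m m' \<theta>" using False q pq unfolding img_m_def by force
      ultimately show ?thesis using assms(3) by auto
    qed
  next
    case False
    show ?thesis
    proof (cases "j < m")
      case True
      with \<open>\<not> i < m\<close> e' have "\<theta> (i - m) x = \<phi> j y" by (simp add: padd_def)
      moreover have "\<phi> j y \<in> img_m m \<phi>" using True unfolding img_m_def by force
      moreover have "\<theta> (i - m) x \<in> img_m m' \<theta>" using False p pq unfolding img_m_def by force
      ultimately show ?thesis using assms(3) by auto
    next
      case False
      with \<open>\<not> i < m\<close> e' have "\<theta> (i - m) x = \<theta> (j - m) y" by (simp add: padd_def)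
      then have "(i - m, x) = (j - m, y)"
        using inj_onD[OF assms(2)[unfolded inj_m_def], of "(i - m, x)" "(j - m, y)"] False \<open>\<not> i < m\<close> p q pq by auto
      then show ?thesis using False \<open>\<not> i < m\<close> pq by auto
    qed
  qed
qed

lemma upt_split: "[0..<m + m'] = [0..<m] @ map (\<lambda>i. i + m) [0..<m']"
  by (simp add: map_add_upt upt_add_eq_append[of 0 m m'] add.commute)

context psc begin

lemma pstar_cong: "(\<forall>i<length Xs. \<psi>1 i = \<psi>2 i) \<Longrightarrow> pstar C \<psi>1 Xs = pstar C \<psi>2 Xs"
  unfolding pstar_def by (intro arg_cong[where f="sumO C"] map_cong) auto

lemma brk_cong: "(\<forall>i<length Xs. \<psi>1 i = \<psi>2 i) \<Longrightarrow> (\<forall>i<length Xs. \<phi>1 i = \<phi>2 i) \<Longrightarrow> brk C \<psi>1 \<phi>1 Xs = brk C \<psi>2 \<phi>2 Xs"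
  unfolding brk_def by (intro arg_cong[where f="sumM C"] map_cong) auto

lemma reindex:
  assumes ok: "set Zs \<subseteq> Ob C" and len: "length XX = length Zs"
    and mu: "\<forall>j<length Zs. \<mu> j < length Zs" "inj_on \<mu> {0..<length Zs}"
    and nth: "\<forall>j<length Zs. XX ! j = Zs ! (\<mu> j)"
    and i: "inj_m (length Zs) \<psi>" "inj_m (length Zs) \<psi>'"
  shows "pstar C (\<lambda>j. \<psi> (\<mu> j)) XX = pstar C \<psi> Zs"
    "brk C (\<lambda>j. \<psi>' (\<mu> j)) (\<lambda>j. \<psi> (\<mu> j)) XX = brk C \<psi>' \<psi> Zs"
    "inj_m (length XX) (\<lambda>j. \<psi> (\<mu> j))"
proof -
  let ?N = "length Zs"
  note pu = perm_upt[OF mu]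
  have "pstar C (\<lambda>j. \<psi> (\<mu> j)) XX = sumO C (map (\<lambda>k. actO C (\<psi> k) (Zs ! k)) (map \<mu> [0..<?N]))"
    unfolding pstar_def len map_map comp_def using nth by (intro arg_cong[where f="sumO C"] map_cong) auto
  also have "\<dots> = pstar C \<psi> Zs"
    unfolding pstar_def by (rule sumO_perm[OF good_piece[OF i(1) refl ok]]) (use pu in auto)
  finally show "pstar C (\<lambda>j. \<psi> (\<mu> j)) XX = pstar C \<psi> Zs" .
  have "brk C (\<lambda>j. \<psi>' (\<mu> j)) (\<lambda>j. \<psi> (\<mu> j)) XX = sumM C (map (\<lambda>k. actM C (\<psi>' k) (\<psi> k) (ide C (Zs ! k))) (map \<mu> [0..<?N]))"
    unfolding brk_def len map_map comp_def using nth by (intro arg_cong[where f="sumM C"] map_cong) auto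
  also have "\<dots> = brk C \<psi>' \<psi> Zs"
    unfolding brk_def by (rule sumM_perm[OF good_brk[OF i(1) i(2) refl ok]]) (use pu in auto)
  finally show "brk C (\<lambda>j. \<psi>' (\<mu> j)) (\<lambda>j. \<psi> (\<mu> j)) XX = brk C \<psi>' \<psi> Zs" .
  show "inj_m (length XX) (\<lambda>j. \<psi> (\<mu> j))"
    unfolding inj_m_def len
  proof (rule inj_onI)
    fix p q assume p: "p \<in> {..<?N} \<times> UNIV" and q: "q \<in> {..<?N} \<times> UNIV"
      and e: "(\<lambda>(j, x). \<psi> (\<mu> j) x) p = (\<lambda>(j, x). \<psi> (\<mu> j) x) q"
    obtain j x k y where pq: "p = (j, x)" "q = (k, y)" by (cases p, cases q) auto
    have "(\<mu> j, x) = (\<mu> k, y)"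
      using inj_onD[OF i(1)[unfolded inj_m_def], of "(\<mu> j, x)" "(\<mu> k, y)"] e pq p q mu(1) by auto
    then show "p = q" using inj_onD[OF mu(2), of j k] p q pq by auto
  qed
qed

lemma pstar_app:
  assumes okX: "set Xs \<subseteq> Ob C" and okX': "set Xs' \<subseteq> Ob C"
    and i: "inj_m (length Xs) \<phi>" "inj_m (length Xs') \<theta>" and d: "img_m (length Xs) \<phi> \<inter> img_m (length Xs') \<theta> = {}"
  shows "pstar C (padd (length Xs) \<phi> \<theta>) (Xs @ Xs') = plO C (pstar C \<phi> Xs) (pstar C \<theta> Xs')"
    "Defs.disj C (pstar C \<phi> Xs) (pstar C \<theta> Xs')"
proof -
  let ?m = "length Xs" and ?m' = "length Xs'"
  have ip: "inj_m (length (Xs @ Xs')) (padd ?m \<phi> \<theta>)" using padd_inj[OF i d] by simp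
  have ok: "set (Xs @ Xs') \<subseteq> Ob C" using okX okX' by simp
  note g = good_piece[OF ip refl ok]
  define D where "D i = actO C (padd ?m \<phi> \<theta> i) ((Xs @ Xs') ! i)" for i
  have "pstar C (padd ?m \<phi> \<theta>) (Xs @ Xs') = sumO C (map D ([0..<?m] @ map (\<lambda>i. i + ?m) [0..<?m']))"
    unfolding pstar_def D_def by (simp add: upt_split[symmetric] add.commute)
  also have "\<dots> = plO C (sumO C (map D [0..<?m])) (sumO C (map D (map (\<lambda>i. i + ?m) [0..<?m'])))"
    by (rule sumO_append[OF g[folded D_def]]) (auto simp: distinct_map inj_on_def)
  also have "sumO C (map D [0..<?m]) = pstar C \<phi> Xs"
    unfolding pstar_def D_def by (intro arg_cong[where f="sumO C"] map_cong) (auto simp: padd_def nth_append)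
  also have "sumO C (map D (map (\<lambda>i. i + ?m) [0..<?m'])) = pstar C \<theta> Xs'"
    unfolding pstar_def D_def by (auto simp: padd_def nth_append intro!: arg_cong[where f="sumO C"])
  finally show "pstar C (padd (length Xs) \<phi> \<theta>) (Xs @ Xs') = plO C (pstar C \<phi> Xs) (pstar C \<theta> Xs')" .
  show "Defs.disj C (pstar C \<phi> Xs) (pstar C \<theta> Xs')"
    unfolding disj_def using pstar_supp[OF i(1) okX] pstar_supp[OF i(2) okX'] d by blast
qed

lemma brk_app:
  assumes okX: "set Xs \<subseteq> Ob C" and okX': "set Xs' \<subseteq> Ob C"
    and i: "inj_m (length Xs) \<phi>" "inj_m (length Xs') \<theta>" and d: "img_m (length Xs) \<phi> \<inter> img_m (length Xs') \<theta> = {}"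
    and i': "inj_m (length Xs) \<phi>'" "inj_m (length Xs') \<theta>'" and d': "img_m (length Xs) \<phi>' \<inter> img_m (length Xs') \<theta>' = {}"
  shows "brk C (padd (length Xs) \<phi>' \<theta>') (padd (length Xs) \<phi> \<theta>) (Xs @ Xs') = plM C (brk C \<phi>' \<phi> Xs) (brk C \<theta>' \<theta> Xs')"
proof -
  let ?m = "length Xs" and ?m' = "length Xs'"
  have ip: "inj_m (length (Xs @ Xs')) (padd ?m \<phi> \<theta>)" using padd_inj[OF i d] by simp
  have ip': "inj_m (length (Xs @ Xs')) (padd ?m \<phi>' \<theta>')" using padd_inj[OF i' d'] by simp
  have ok: "set (Xs @ Xs') \<subseteq> Ob C" using okX okX' by simp
  note g = good_brk[OF ip ip' refl ok]
  define F where "F i = actM C (padd ?m \<phi>' \<theta>' i) (padd ?m \<phi> \<theta> i) (ide C ((Xs @ Xs') ! i))" for i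
  have "brk C (padd ?m \<phi>' \<theta>') (padd ?m \<phi> \<theta>) (Xs @ Xs') = sumM C (map F ([0..<?m] @ map (\<lambda>i. i + ?m) [0..<?m']))"
    unfolding brk_def F_def by (simp add: upt_split[symmetric] add.commute)
  also have "\<dots> = plM C (sumM C (map F [0..<?m])) (sumM C (map F (map (\<lambda>i. i + ?m) [0..<?m'])))"
    by (rule sumM_append[OF g[folded F_def]]) (auto simp: distinct_map inj_on_def)
  also have "sumM C (map F [0..<?m]) = brk C \<phi>' \<phi> Xs"
    unfolding brk_def F_def by (intro arg_cong[where f="sumM C"] map_cong) (auto simp: padd_def nth_append)
  also have "sumM C (map F (map (\<lambda>i. i + ?m) [0..<?m'])) = brk C \<theta>' \<theta> Xs'"
    unfolding brk_def F_def by (auto simp: padd_def nth_append intro!: arg_cong[where f="sumM C"])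
  finally show ?thesis .
qed

end


context psc begin

lemma rep_tensor:
  assumes ok: "set Xs \<subseteq> Ob C" "set Ys \<subseteq> Ob C" "set Xs' \<subseteq> Ob C" "set Ys' \<subseteq> Ob C"
    and r1: "rep_ok C Xs Ys (\<psi>, f, \<phi>)" and r2: "rep_ok C Xs' Ys' (\<rho>, g, \<theta>)"
    and dX: "img_m (length Xs) \<phi> \<inter> img_m (length Xs') \<theta> = {}"
    and dY: "img_m (length Ys) \<psi> \<inter> img_m (length Ys') \<rho> = {}"
  shows "rep_ok C (Xs @ Xs') (Ys @ Ys') (padd (length Ys) \<psi> \<rho>, plM C f g, padd (length Xs) \<phi> \<theta>)"
proof -
  note a = rep_okD[OF r1] and b = rep_okD[OF r2]
  have i: "inj_m (length Xs) \<phi>" "inj_m (length Ys) \<psi>" "inj_m (length Xs') \<theta>" "inj_m (length Ys') \<rho>"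
    using a b by auto
  have h: "f \<in> Hom C (pstar C \<phi> Xs) (pstar C \<psi> Ys)" "g \<in> Hom C (pstar C \<theta> Xs') (pstar C \<rho> Ys')" using a b by auto
  note pX = pstar_app[OF ok(1) ok(3) i(1) i(3) dX] and pY = pstar_app[OF ok(2) ok(4) i(2) i(4) dY]
  show ?thesis
  proof (rule rep_okI)
    show "inj_m (length (Xs @ Xs')) (padd (length Xs) \<phi> \<theta>)" using padd_inj[OF i(1,3) dX] by simp
    show "inj_m (length (Ys @ Ys')) (padd (length Ys) \<psi> \<rho>)" using padd_inj[OF i(2,4) dY] by simp
    show "plM C f g \<in> Hom C (pstar C (padd (length Xs) \<phi> \<theta>) (Xs @ Xs')) (pstar C (padd (length Ys) \<psi> \<rho>) (Ys @ Ys'))"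
      unfolding pX(1) pY(1)
      by (rule plM_hom[OF pstar_Ob[OF i(1) ok(1)] pstar_Ob[OF i(2) ok(2)] pstar_Ob[OF i(3) ok(3)] pstar_Ob[OF i(4) ok(4)] h pX(2) pY(2)])
  qed
qed

lemma plM_cmp3:
  assumes O: "W \<in> Ob C" "X \<in> Ob C" "Y \<in> Ob C" "Z \<in> Ob C" "W' \<in> Ob C" "X' \<in> Ob C" "Y' \<in> Ob C" "Z' \<in> Ob C"
    and h: "p \<in> Hom C W X" "k \<in> Hom C X Y" "q \<in> Hom C Y Z" "p' \<in> Hom C W' X'" "k' \<in> Hom C X' Y'" "q' \<in> Hom C Y' Z'"
    and d: "Defs.disj C W W'" "Defs.disj C X X'" "Defs.disj C Y Y'" "Defs.disj C Z Z'"
  shows "plM C (cmp C q (cmp C k p)) (cmp C q' (cmp C k' p')) = cmp C (plM C q q') (cmp C (plM C k k') (plM C p p'))"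
proof -
  have "plM C (cmp C q (cmp C k p)) (cmp C q' (cmp C k' p')) = cmp C (plM C q q') (plM C (cmp C k p) (cmp C k' p'))"
    by (rule plM_cmp[OF O(1,3,4,5,7,8) cmp_hom[OF O(1,2,3) h(1,2)] h(3) cmp_hom[OF O(5,6,7) h(4,5)] h(6) d(1,3,4)])
  also have "plM C (cmp C k p) (cmp C k' p') = cmp C (plM C k k') (plM C p p')"
    by (rule plM_cmp[OF O(1,2,3,5,6,7) h(1,2,4,5) d(1,2,3)])
  finally show ?thesis .
qed

lemma stensor_eq:
  assumes ok: "set Xs \<subseteq> Ob C" "set Ys \<subseteq> Ob C" "set Xs' \<subseteq> Ob C" "set Ys' \<subseteq> Ob C"
    and r1: "rep_ok C Xs Ys t1" and r2: "rep_ok C Xs' Ys' t2"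
    and m1: "(\<psi>, f, \<phi>) \<in> scls C Xs Ys t1" and m2: "(\<rho>, g, \<theta>) \<in> scls C Xs' Ys' t2"
    and dX: "img_m (length Xs) \<phi> \<inter> img_m (length Xs') \<theta> = {}"
    and dY: "img_m (length Ys) \<psi> \<inter> img_m (length Ys') \<rho> = {}"
  shows "stensor C (Xs, Ys, scls C Xs Ys t1) (Xs', Ys', scls C Xs' Ys' t2)
     = (Xs @ Xs', Ys @ Ys', scls C (Xs @ Xs') (Ys @ Ys') (padd (length Ys) \<psi> \<rho>, plM C f g, padd (length Xs) \<phi> \<theta>))"
proof -
  define Pr where "Pr = (\<lambda>p. fst p \<in> scls C Xs Ys t1 \<and> snd p \<in> scls C Xs' Ys' t2 \<and>
          (case p of ((\<psi>, f, \<phi>), (\<rho>, g, \<theta>)) \<Rightarrow>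
             img_m (length Xs) \<phi> \<inter> img_m (length Xs') \<theta> = {} \<and>
             img_m (length Ys) \<psi> \<inter> img_m (length Ys') \<rho> = {}))"
  have "Pr ((\<psi>, f, \<phi>), (\<rho>, g, \<theta>))" unfolding Pr_def using m1 m2 dX dY by simp
  then have sP: "Pr (SOME p. Pr p)" by (rule someI)
  obtain \<psi>1 f1 \<phi>1 \<rho>1 g1 \<theta>1 where e: "(SOME p. Pr p) = ((\<psi>1, f1, \<phi>1), (\<rho>1, g1, \<theta>1))" by (metis prod_cases3 prod.exhaust)
  have st: "stensor C (Xs, Ys, scls C Xs Ys t1) (Xs', Ys', scls C Xs' Ys' t2)
     = (Xs @ Xs', Ys @ Ys', scls C (Xs @ Xs') (Ys @ Ys') (padd (length Ys) \<psi>1 \<rho>1, plM C f1 g1, padd (length Xs) \<phi>1 \<theta>1))"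
    unfolding stensor_def using e[unfolded Pr_def] by simp
  have m1': "(\<psi>1, f1, \<phi>1) \<in> scls C Xs Ys t1" and m2': "(\<rho>1, g1, \<theta>1) \<in> scls C Xs' Ys' t2"
    and dX1: "img_m (length Xs) \<phi>1 \<inter> img_m (length Xs') \<theta>1 = {}" and dY1: "img_m (length Ys) \<psi>1 \<inter> img_m (length Ys') \<rho>1 = {}"
    using sP[unfolded e] unfolding Pr_def by auto
  have ro: "rep_ok C Xs Ys (\<psi>, f, \<phi>)" "rep_ok C Xs Ys (\<psi>1, f1, \<phi>1)" "rep_ok C Xs' Ys' (\<rho>, g, \<theta>)" "rep_ok C Xs' Ys' (\<rho>1, g1, \<theta>1)"
    using m1 m1' m2 m2' unfolding scls_def by auto
  have i: "inj_m (length Xs) \<phi>" "inj_m (length Ys) \<psi>" "inj_m (length Xs') \<theta>" "inj_m (length Ys') \<rho>"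
     "inj_m (length Xs) \<phi>1" "inj_m (length Ys) \<psi>1" "inj_m (length Xs') \<theta>1" "inj_m (length Ys') \<rho>1"
    using rep_okD[OF ro(1)] rep_okD[OF ro(2)] rep_okD[OF ro(3)] rep_okD[OF ro(4)] by auto
  have hf1: "f1 \<in> Hom C (pstar C \<phi>1 Xs) (pstar C \<psi>1 Ys)" and hg1: "g1 \<in> Hom C (pstar C \<theta>1 Xs') (pstar C \<rho>1 Ys')"
    using rep_okD[OF ro(2)] rep_okD[OF ro(4)] by auto
  have ef: "f = cmp C (brk C \<psi> \<psi>1 Ys) (cmp C f1 (brk C \<phi>1 \<phi> Xs))"
    using scls_srel[OF ok(1,2) r1 m1' m1] by (simp add: srel_iff)
  have eg: "g = cmp C (brk C \<rho> \<rho>1 Ys') (cmp C g1 (brk C \<theta>1 \<theta> Xs'))"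
    using scls_srel[OF ok(3,4) r2 m2' m2] by (simp add: srel_iff)
  have rc1: "rep_ok C (Xs @ Xs') (Ys @ Ys') (padd (length Ys) \<psi>1 \<rho>1, plM C f1 g1, padd (length Xs) \<phi>1 \<theta>1)"
    by (rule rep_tensor[OF ok ro(2) ro(4) dX1 dY1])
  have rc: "rep_ok C (Xs @ Xs') (Ys @ Ys') (padd (length Ys) \<psi> \<rho>, plM C f g, padd (length Xs) \<phi> \<theta>)"
    by (rule rep_tensor[OF ok ro(1) ro(3) dX dY])
  have bX: "brk C (padd (length Xs) \<phi>1 \<theta>1) (padd (length Xs) \<phi> \<theta>) (Xs @ Xs') = plM C (brk C \<phi>1 \<phi> Xs) (brk C \<theta>1 \<theta> Xs')"
    by (rule brk_app[OF ok(1,3) i(1,3) dX i(5,7) dX1])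
  have bY: "brk C (padd (length Ys) \<psi> \<rho>) (padd (length Ys) \<psi>1 \<rho>1) (Ys @ Ys') = plM C (brk C \<psi> \<psi>1 Ys) (brk C \<rho> \<rho>1 Ys')"
    by (rule brk_app[OF ok(2,4) i(6,8) dY1 i(2,4) dY])
  note O = pstar_Ob[OF i(1) ok(1)] pstar_Ob[OF i(5) ok(1)] pstar_Ob[OF i(6) ok(2)] pstar_Ob[OF i(2) ok(2)]
     pstar_Ob[OF i(3) ok(3)] pstar_Ob[OF i(7) ok(3)] pstar_Ob[OF i(8) ok(4)] pstar_Ob[OF i(4) ok(4)]
  have key: "plM C f g = cmp C (brk C (padd (length Ys) \<psi> \<rho>) (padd (length Ys) \<psi>1 \<rho>1) (Ys @ Ys'))
       (cmp C (plM C f1 g1) (brk C (padd (length Xs) \<phi>1 \<theta>1) (padd (length Xs) \<phi> \<theta>) (Xs @ Xs')))"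
    unfolding bX bY ef eg
    by (rule plM_cmp3[OF O brk_hom[OF i(1,5) ok(1)] hf1 brk_hom[OF i(6,2) ok(2)] brk_hom[OF i(3,7) ok(3)] hg1 brk_hom[OF i(8,4) ok(4)]
        pstar_app(2)[OF ok(1,3) i(1,3) dX] pstar_app(2)[OF ok(1,3) i(5,7) dX1] pstar_app(2)[OF ok(2,4) i(6,8) dY1] pstar_app(2)[OF ok(2,4) i(2,4) dY]])
  have mem: "(padd (length Ys) \<psi> \<rho>, plM C f g, padd (length Xs) \<phi> \<theta>) \<in> scls C (Xs @ Xs') (Ys @ Ys') (padd (length Ys) \<psi>1 \<rho>1, plM C f1 g1, padd (length Xs) \<phi>1 \<theta>1)"
    unfolding scls_def using rc key by (simp add: srel_iff)
  have ok2: "set (Xs @ Xs') \<subseteq> Ob C" "set (Ys @ Ys') \<subseteq> Ob C" using ok by auto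
  show ?thesis unfolding st using scls_eq[OF ok2 rc1 mem] by simp
qed

end


lemma pos_kappa: assumes fin: "finite U" and i: "i < card U" shows "pos U (kappa U i) = i"
proof -
  define xs where "xs = sorted_list_of_set U"
  have sw: "sorted_wrt (<) xs" unfolding xs_def by (rule strict_sorted_list_of_set)
  have so: "sorted xs" unfolding xs_def by simp
  have di: "distinct xs" unfolding xs_def by simp
  have len: "length xs = card U" unfolding xs_def by simp
  have setx: "set xs = U" unfolding xs_def using fin by simp
  have eq: "{b \<in> U. b < xs ! i} = (\<lambda>k. xs ! k) ` {..<i}"
  proof
    show "(\<lambda>k. xs ! k) ` {..<i} \<subseteq> {b \<in> U. b < xs ! i}"
    proof
      fix b assume "b \<in> (\<lambda>k. xs ! k) ` {..<i}"
      then obtain k where k: "k < i" "b = xs ! k" by auto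
      then have "b \<in> U" using i len setx by (metis nth_mem order.strict_trans)
      moreover have "b < xs ! i" using sorted_wrt_nth_less[OF sw k(1)] i len k by simp
      ultimately show "b \<in> {b \<in> U. b < xs ! i}" by simp
    qed
  next
    show "{b \<in> U. b < xs ! i} \<subseteq> (\<lambda>k. xs ! k) ` {..<i}"
    proof
      fix b assume b: "b \<in> {b \<in> U. b < xs ! i}"
      then obtain k where k: "k < length xs" "b = xs ! k" using setx by (metis in_set_conv_nth mem_Collect_eq)
      have "k < i"
      proof (rule ccontr)
        assume "\<not> k < i"
        then have "xs ! i \<le> xs ! k" using sorted_nth_mono[OF so _ k(1)] by simp
        then show False using b k by simp
      qed
      then show "b \<in> (\<lambda>k. xs ! k) ` {..<i}" using k by auto
    qed
  qed
  have "inj_on (\<lambda>k. xs ! k) {..<i}" using di i len by (simp add: inj_on_def nth_eq_iff_index_eq)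
  then have "card {b \<in> U. b < xs ! i} = i" unfolding eq by (simp add: card_image)
  then show ?thesis unfolding pos_def kappa_def xs_def[symmetric] .
qed

lemma kappa_pos: assumes fin: "finite U" and a: "a \<in> U" shows "pos U a < card U" "kappa U (pos U a) = a"
proof -
  obtain i where i: "i < card U" "kappa U i = a"
    using a fin unfolding kappa_def by (metis in_set_conv_nth length_sorted_list_of_set set_sorted_list_of_set)
  show "pos U a < card U" "kappa U (pos U a) = a" using pos_kappa[OF fin i(1)] i by auto
qed

lemma tsupp_tplO: "tsupp (tplO P P') = tsupp P \<union> tsupp P'"
  unfolding tsupp_def tplO_def by auto

lemma theta_tplO: assumes P: "theta_obj C P" and P': "theta_obj C P'" and d: "tsupp P \<inter> tsupp P' = {}"
  shows "theta_obj C (tplO P P')"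
  unfolding theta_obj_def
proof (intro conjI allI)
  show "finite (tsupp (tplO P P'))" unfolding tsupp_tplO using theta_fin[OF P] theta_fin[OF P'] by simp
  fix i
  show "tplO P P' i = [] \<or> (\<exists>x\<in>Ob C. tplO P P' i = [x])"
  proof (cases "i \<in> tsupp P")
    case True
    then have "P' i = []" using d unfolding tsupp_def by auto
    then show ?thesis using P unfolding theta_obj_def tplO_def by simp
  next
    case False
    then have "P i = []" unfolding tsupp_def by auto
    then show ?thesis using P' unfolding theta_obj_def tplO_def by simp
  qed
qed

lemma hd_tplO: assumes d: "tsupp P \<inter> tsupp P' = {}"
  shows "a \<in> tsupp P \<Longrightarrow> hd (tplO P P' a) = hd (P a)" "a \<notin> tsupp P \<Longrightarrow> hd (tplO P P' a) = hd (P' a)"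
  using d unfolding tsupp_def tplO_def by auto


context psc begin

context
  fixes \<phi> :: "nat \<Rightarrow> nat \<Rightarrow> nat" and P P' :: "'o tobj"
  assumes phi: "inj (\<lambda>(i, x). \<phi> i x)" and P: "theta_obj C P" and P': "theta_obj C P'"
    and d: "tsupp P \<inter> tsupp P' = {}"
begin

lemma finA: "finite (tsupp P)" "finite (tsupp P')" "finite (tsupp P \<union> tsupp P')"
  using theta_fin[OF P] theta_fin[OF P'] by auto

lemma PP: "theta_obj C (tplO P P')" by (rule theta_tplO[OF P P' d])

lemma lenXX: "length (tens P @ tens P') = card (tsupp P \<union> tsupp P')"
  using tens_len[OF P] tens_len[OF P'] card_Un_disjoint[OF finA(1,2) d] by simp

lemma lenZs: "length (tens (tplO P P')) = card (tsupp P \<union> tsupp P')"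
  using tens_len[OF PP] tsupp_tplO by metis

definition LL where "LL = sorted_list_of_set (tsupp P) @ sorted_list_of_set (tsupp P')"

lemma LL_facts: "set LL = tsupp P \<union> tsupp P'" "distinct LL" "length LL = card (tsupp P \<union> tsupp P')"
  unfolding LL_def using finA d card_Un_disjoint[OF finA(1,2) d] by auto

lemma XX_nth: "j < card (tsupp P \<union> tsupp P') \<Longrightarrow> (tens P @ tens P') ! j = hd (tplO P P' (LL ! j))"
proof -
  assume j: "j < card (tsupp P \<union> tsupp P')"
  show ?thesis
  proof (cases "j < card (tsupp P)")
    case True
    have "LL ! j = sorted_list_of_set (tsupp P) ! j" unfolding LL_def using True finA by (simp add: nth_append)
    moreover have "sorted_list_of_set (tsupp P) ! j \<in> tsupp P" using True finA by (metis kappa_def kappa_in)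
    ultimately show ?thesis using True tens_len[OF P] tens_nth[OF P True] hd_tplO(1)[OF d]
      by (simp add: nth_append kappa_def)
  next
    case False
    define k where "k = j - card (tsupp P)"
    have k: "k < card (tsupp P')" using j False card_Un_disjoint[OF finA(1,2) d] unfolding k_def by simp
    have "LL ! j = sorted_list_of_set (tsupp P') ! k" unfolding LL_def k_def using False finA by (simp add: nth_append)
    moreover have "sorted_list_of_set (tsupp P') ! k \<in> tsupp P'" using k finA by (metis kappa_def kappa_in)
    moreover then have "sorted_list_of_set (tsupp P') ! k \<notin> tsupp P" using d by blast
    ultimately show ?thesis using False tens_len[OF P] tens_nth[OF P' k] hd_tplO(2)[OF d]
      by (simp add: nth_append kappa_def k_def)
  qed
qed

lemma ttau_facts: assumes j: "j < card (tsupp P \<union> tsupp P')"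
  shows "ttau P P' j < card (tsupp P \<union> tsupp P')" "kappa (tsupp P \<union> tsupp P') (ttau P P' j) = LL ! j"
proof -
  have "LL ! j \<in> tsupp P \<union> tsupp P'" using LL_facts j by (metis nth_mem)
  moreover have "ttau P P' j = pos (tsupp P \<union> tsupp P') (LL ! j)" unfolding ttau_def LL_def by simp
  ultimately show "ttau P P' j < card (tsupp P \<union> tsupp P')" "kappa (tsupp P \<union> tsupp P') (ttau P P' j) = LL ! j"
    using kappa_pos[OF finA(3)] by auto
qed

lemma ttau_inj: "inj_on (ttau P P') {0..<card (tsupp P \<union> tsupp P')}"
proof (rule inj_onI)
  fix j k assume j: "j \<in> {0..<card (tsupp P \<union> tsupp P')}" and k: "k \<in> {0..<card (tsupp P \<union> tsupp P')}"
    and e: "ttau P P' j = ttau P P' k"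
  then have "LL ! j = LL ! k" using ttau_facts(2) by (metis atLeastLessThan_iff)
  then show "j = k" using LL_facts j k nth_eq_iff_index_eq by (metis atLeastLessThan_iff)
qed

lemma XX_Zs: "j < card (tsupp P \<union> tsupp P') \<Longrightarrow> (tens P @ tens P') ! j = tens (tplO P P') ! (ttau P P' j)"
proof -
  assume j: "j < card (tsupp P \<union> tsupp P')"
  have "tens (tplO P P') ! (ttau P P' j) = hd (tplO P P' (kappa (tsupp (tplO P P')) (ttau P P' j)))"
    by (rule tens_nth[OF PP]) (use ttau_facts(1)[OF j] in \<open>simp add: tsupp_tplO\<close>)
  also have "\<dots> = hd (tplO P P' (LL ! j))" unfolding tsupp_tplO ttau_facts(2)[OF j] ..
  finally show ?thesis using XX_nth[OF j] by simp
qed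

lemma tau_sigma: "j < card (tsupp P \<union> tsupp P') \<Longrightarrow>
   padd (length (tens P)) (S_rep_src \<phi> P) (S_rep_src \<phi> P') j = S_rep_src \<phi> (tplO P P') (ttau P P' j)"
proof -
  assume j: "j < card (tsupp P \<union> tsupp P')"
  have r: "S_rep_src \<phi> (tplO P P') (ttau P P' j) = (\<lambda>x. \<phi> (LL ! j) x)"
    unfolding S_rep_src_def tsupp_tplO using ttau_facts(2)[OF j] by simp
  have "padd (length (tens P)) (S_rep_src \<phi> P) (S_rep_src \<phi> P') j = (\<lambda>x. \<phi> (LL ! j) x)"
  proof (cases "j < card (tsupp P)")
    case True
    then show ?thesis unfolding padd_def S_rep_src_def LL_def kappa_def using tens_len[OF P] finA by (simp add: nth_append)
  next
    case False
    then show ?thesis unfolding padd_def S_rep_src_def LL_def kappa_def using tens_len[OF P] finA by (simp add: nth_append)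
  qed
  then show ?thesis using r by simp
qed

lemma img_disj: "img_m (length (tens P)) (S_rep_src \<phi> P) \<inter> img_m (length (tens P')) (S_rep_src \<phi> P') = {}"
proof -
  { fix i x j y assume i: "i < card (tsupp P)" and j: "j < card (tsupp P')"
      and e: "\<phi> (kappa (tsupp P) i) x = \<phi> (kappa (tsupp P') j) y"
    have "(kappa (tsupp P) i, x) = (kappa (tsupp P') j, y)" using injD[OF phi] e by (metis case_prod_conv)
    then have False using kappa_in[OF finA(1) i] kappa_in[OF finA(2) j] d by auto }
  then show ?thesis unfolding img_m_def S_rep_src_def tens_len[OF P] tens_len[OF P'] by fastforce
qed

lemmas okXX = tens_Ob[OF P] tens_Ob[OF P']
lemma okXX2: "set (tens P @ tens P') \<subseteq> Ob C" using okXX by simp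
lemmas okZs = tens_Ob[OF PP]

lemma iZ: "inj_m (length (tens (tplO P P'))) (S_rep_src \<phi> (tplO P P'))" by (rule inj_m_Srep[OF phi PP])

lemma lenXZ: "length (tens P @ tens P') = length (tens (tplO P P'))" using lenXX lenZs by simp
lemma mu1: "\<forall>j<length (tens (tplO P P')). ttau P P' j < length (tens (tplO P P'))" using ttau_facts(1) lenZs by simp
lemma mu2: "inj_on (ttau P P') {0..<length (tens (tplO P P'))}" using ttau_inj lenZs by simp
lemma mu3: "\<forall>j<length (tens (tplO P P')). (tens P @ tens P') ! j = tens (tplO P P') ! (ttau P P' j)" using XX_Zs lenZs by simp

lemma reidx:
  assumes "inj_m (length (tens (tplO P P'))) \<psi>" "inj_m (length (tens (tplO P P'))) \<psi>'"
  shows "pstar C (\<lambda>j. \<psi> (ttau P P' j)) (tens P @ tens P') = pstar C \<psi> (tens (tplO P P'))"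
    "brk C (\<lambda>j. \<psi>' (ttau P P' j)) (\<lambda>j. \<psi> (ttau P P' j)) (tens P @ tens P') = brk C \<psi>' \<psi> (tens (tplO P P'))"
    "inj_m (length (tens P @ tens P')) (\<lambda>j. \<psi> (ttau P P' j))"
  by (rule reindex[OF okZs lenXZ mu1 mu2 mu3 assms])+

lemma tau_eq: "\<forall>j<length (tens P @ tens P'). padd (length (tens P)) (S_rep_src \<phi> P) (S_rep_src \<phi> P') j
     = S_rep_src \<phi> (tplO P P') (ttau P P' j)"
  using tau_sigma lenXX by simp

lemma pstar_tau: "pstar C (padd (length (tens P)) (S_rep_src \<phi> P) (S_rep_src \<phi> P')) (tens P @ tens P') = S_obj C \<phi> (tplO P P')"
  using pstar_cong[OF tau_eq] reidx(1)[OF iZ iZ] pstar_S[OF PP] by simp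

lemma i_tau: "inj_m (length (tens P @ tens P')) (padd (length (tens P)) (S_rep_src \<phi> P) (S_rep_src \<phi> P'))"
  using padd_inj[OF inj_m_Srep[OF phi P] inj_m_Srep[OF phi P'] img_disj] by simp

lemma obj_sum: "S_obj C \<phi> (tplO P P') = plO C (S_obj C \<phi> P) (S_obj C \<phi> P')"
   "Defs.disj C (S_obj C \<phi> P) (S_obj C \<phi> P')"
  using pstar_app[OF okXX inj_m_Srep[OF phi P] inj_m_Srep[OF phi P'] img_disj] pstar_tau pstar_S[OF P] pstar_S[OF P'] by auto

lemma can_mu: "inj_m (length (tens P @ tens P')) (\<lambda>j. can (ttau P P' j))"
  using reidx(3)[OF inj_m_can inj_m_can] .

lemma pstar_can: "pstar C (\<lambda>j. can (ttau P P' j)) (tens P @ tens P') = pstar C can (tens (tplO P P'))"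
  using reidx(1)[OF inj_m_can inj_m_can] .

lemma SPP_Ob: "S_obj C \<phi> (tplO P P') \<in> Ob C" by (rule S_obj_Ob[OF phi PP])

lemma brk_tau: "brk C (padd (length (tens P)) (S_rep_src \<phi> P) (S_rep_src \<phi> P')) (\<lambda>j. can (ttau P P' j)) (tens P @ tens P')
     = brk C (S_rep_src \<phi> (tplO P P')) can (tens (tplO P P'))"
  using brk_cong[OF tau_eq, of "\<lambda>j. can (ttau P P' j)" "\<lambda>j. can (ttau P P' j)"] reidx(2)[OF inj_m_can iZ] by simp

lemma brk_tau': "brk C (\<lambda>j. can (ttau P P' j)) (padd (length (tens P)) (S_rep_src \<phi> P) (S_rep_src \<phi> P')) (tens P @ tens P')
     = brk C can (S_rep_src \<phi> (tplO P P')) (tens (tplO P P'))"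
  using brk_cong[of "tens P @ tens P'" "\<lambda>j. can (ttau P P' j)" "\<lambda>j. can (ttau P P' j)", OF _ tau_eq] reidx(2)[OF iZ inj_m_can] by simp

lemma round_trip: "cmp C (brk C (S_rep_src \<phi> (tplO P P')) can (tens (tplO P P')))
    (cmp C (ide C (pstar C can (tens (tplO P P')))) (brk C can (S_rep_src \<phi> (tplO P P')) (tens (tplO P P'))))
   = ide C (S_obj C \<phi> (tplO P P'))"
proof -
  let ?Z = "tens (tplO P P')" and ?s = "S_rep_src \<phi> (tplO P P')"
  have h: "brk C can ?s ?Z \<in> Hom C (pstar C ?s ?Z) (pstar C can ?Z)" by (rule brk_hom[OF iZ inj_m_can okZs])
  have "cmp C (ide C (pstar C can ?Z)) (brk C can ?s ?Z) = brk C can ?s ?Z"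
    by (rule cmp_ide_l[OF pstar_Ob[OF iZ okZs] pstar_Ob[OF inj_m_can okZs] h])
  then show ?thesis using brk_cmp[OF iZ inj_m_can iZ okZs] brk_id[OF iZ okZs] pstar_S[OF PP] by simp
qed

lemma cohinv_rep:
  shows "rep_ok C (tens (tplO P P')) (tens P @ tens P') (\<lambda>j. can (ttau P P' j), ide C (pstar C can (tens (tplO P P'))), can)"
    "(padd (length (tens P)) (S_rep_src \<phi> P) (S_rep_src \<phi> P'), ide C (S_obj C \<phi> (tplO P P')), S_rep_src \<phi> (tplO P P'))
       \<in> scls C (tens (tplO P P')) (tens P @ tens P') (\<lambda>j. can (ttau P P' j), ide C (pstar C can (tens (tplO P P'))), can)"
proof -
  let ?Z = "tens (tplO P P')" and ?X = "tens P @ tens P'"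
  have cO: "pstar C can ?Z \<in> Ob C" by (rule pstar_Ob[OF inj_m_can okZs])
  show r: "rep_ok C ?Z ?X (\<lambda>j. can (ttau P P' j), ide C (pstar C can ?Z), can)"
    by (rule rep_okI[OF inj_m_can can_mu]) (simp add: pstar_can ide_hom[OF cO])
  show "(padd (length (tens P)) (S_rep_src \<phi> P) (S_rep_src \<phi> P'), ide C (S_obj C \<phi> (tplO P P')), S_rep_src \<phi> (tplO P P'))
       \<in> scls C ?Z ?X (\<lambda>j. can (ttau P P' j), ide C (pstar C can ?Z), can)"
    using scls_repr[OF okZs okXX2 r iZ i_tau] unfolding brk_tau round_trip .
qed

lemma coh_rep:
  shows "rep_ok C (tens P @ tens P') (tens (tplO P P')) (can, ide C (pstar C can (tens (tplO P P'))), \<lambda>j. can (ttau P P' j))"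
    "(S_rep_src \<phi> (tplO P P'), ide C (S_obj C \<phi> (tplO P P')), padd (length (tens P)) (S_rep_src \<phi> P) (S_rep_src \<phi> P'))
       \<in> scls C (tens P @ tens P') (tens (tplO P P')) (can, ide C (pstar C can (tens (tplO P P'))), \<lambda>j. can (ttau P P' j))"
proof -
  let ?Z = "tens (tplO P P')" and ?X = "tens P @ tens P'"
  have cO: "pstar C can ?Z \<in> Ob C" by (rule pstar_Ob[OF inj_m_can okZs])
  show r: "rep_ok C ?X ?Z (can, ide C (pstar C can ?Z), \<lambda>j. can (ttau P P' j))"
    by (rule rep_okI[OF can_mu inj_m_can]) (simp add: pstar_can ide_hom[OF cO])
  show "(S_rep_src \<phi> (tplO P P'), ide C (S_obj C \<phi> (tplO P P')), padd (length (tens P)) (S_rep_src \<phi> P) (S_rep_src \<phi> P'))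
       \<in> scls C ?X ?Z (can, ide C (pstar C can ?Z), \<lambda>j. can (ttau P P' j))"
    using scls_repr[OF okXX2 okZs r i_tau iZ] unfolding brk_tau' round_trip .
qed

end
end


context psc begin

lemma mor_sum:
  assumes phi: "inj (\<lambda>(i, x). \<phi> i x)" and P: "theta_obj C P" and Q: "theta_obj C Q"
    and P': "theta_obj C P'" and Q': "theta_obj C Q'"
    and dP: "tsupp P \<inter> tsupp P' = {}" and dQ: "tsupp Q \<inter> tsupp Q' = {}"
    and a: "a \<in> Hom (Theta C) P Q" and b: "b \<in> Hom (Theta C) P' Q'"
  shows "S_mor C \<phi> (tplM C a b) = plM C (S_mor C \<phi> a) (S_mor C \<phi> b)"
proof -
  obtain t1 where e1: "a = (P, Q, tens P, tens Q, scls C (tens P) (tens Q) t1)" and r1: "rep_ok C (tens P) (tens Q) t1"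
    using HomTheta[OF a] by blast
  obtain t2 where e2: "b = (P', Q', tens P', tens Q', scls C (tens P') (tens Q') t2)" and r2: "rep_ok C (tens P') (tens Q') t2"
    using HomTheta[OF b] by blast
  define f where "f = S_mor C \<phi> a"
  define g where "g = S_mor C \<phi> b"
  have m1: "(S_rep_src \<phi> Q, f, S_rep_src \<phi> P) \<in> scls C (tens P) (tens Q) t1"
    unfolding f_def e1 by (rule S_mor_mem[OF phi P Q r1])
  have m2: "(S_rep_src \<phi> Q', g, S_rep_src \<phi> P') \<in> scls C (tens P') (tens Q') t2"
    unfolding g_def e2 by (rule S_mor_mem[OF phi P' Q' r2])
  note okP = tens_Ob[OF P] and okQ = tens_Ob[OF Q] and okP' = tens_Ob[OF P'] and okQ' = tens_Ob[OF Q']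
  note okXX = okXX2[OF phi P P' dP] and okYY = okXX2[OF phi Q Q' dQ]
  note okZ = okZs[OF phi P P' dP] and okW = okZs[OF phi Q Q' dQ]
  have PPo: "theta_obj C (tplO P P')" by (rule PP[OF phi P P' dP])
  have QQ: "theta_obj C (tplO Q Q')" by (rule PP[OF phi Q Q' dQ])
  let ?XX = "tens P @ tens P'" and ?YY = "tens Q @ tens Q'" and ?Z = "tens (tplO P P')" and ?W = "tens (tplO Q Q')"
  let ?tP = "padd (length (tens P)) (S_rep_src \<phi> P) (S_rep_src \<phi> P')"
  let ?tQ = "padd (length (tens Q)) (S_rep_src \<phi> Q) (S_rep_src \<phi> Q')"
  let ?sZ = "S_rep_src \<phi> (tplO P P')" and ?sW = "S_rep_src \<phi> (tplO Q Q')"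
  let ?SP = "S_obj C \<phi> (tplO P P')" and ?SQ = "S_obj C \<phi> (tplO Q Q')"
  have ro1: "rep_ok C (tens P) (tens Q) (S_rep_src \<phi> Q, f, S_rep_src \<phi> P)" using m1 unfolding scls_def by simp
  have ro2: "rep_ok C (tens P') (tens Q') (S_rep_src \<phi> Q', g, S_rep_src \<phi> P')" using m2 unfolding scls_def by simp
  have st: "stensor C (tens P, tens Q, scls C (tens P) (tens Q) t1) (tens P', tens Q', scls C (tens P') (tens Q') t2)
      = (?XX, ?YY, scls C ?XX ?YY (?tQ, plM C f g, ?tP))"
    by (rule stensor_eq[OF okP okQ okP' okQ' r1 r2 m1 m2 img_disj[OF phi P P' dP] img_disj[OF phi Q Q' dQ]])
  have rT: "rep_ok C ?XX ?YY (?tQ, plM C f g, ?tP)"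
    by (rule rep_tensor[OF okP okQ okP' okQ' ro1 ro2 img_disj[OF phi P P' dP] img_disj[OF phi Q Q' dQ]])
  have hfg: "plM C f g \<in> Hom C ?SP ?SQ"
    using rep_okD[OF rT] pstar_tau[OF phi P P' dP] pstar_tau[OF phi Q Q' dQ] by simp
  note SPO = SPP_Ob[OF phi P P' dP] and SQO = SPP_Ob[OF phi Q Q' dQ]
  have inner: "scomp C (?XX, ?YY, scls C ?XX ?YY (?tQ, plM C f g, ?tP)) (cohinv C P P')
      = (?Z, ?YY, scls C ?Z ?YY (?tQ, cmp C (plM C f g) (cmp C (brk C ?tP ?tP ?XX) (ide C ?SP)), ?sZ))"
    unfolding cohinv_def
    by (rule scomp_eq[OF okZ okXX okYY cohinv_rep(1)[OF phi P P' dP] rT cohinv_rep(2)[OF phi P P' dP] scls_self[OF okXX okYY rT]])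
  have s1: "cmp C (plM C f g) (cmp C (brk C ?tP ?tP ?XX) (ide C ?SP)) = plM C f g"
    using brk_id[OF i_tau[OF phi P P' dP] okXX] pstar_tau[OF phi P P' dP] cmp_ide_l[OF SPO SPO ide_hom[OF SPO]]
      cmp_ide_r[OF SPO SQO hfg] by simp
  have rin: "rep_ok C ?Z ?YY (?tQ, plM C f g, ?sZ)"
    by (rule rep_okI[OF iZ[OF phi P P' dP] i_tau[OF phi Q Q' dQ]]) (use hfg pstar_S[OF PPo] pstar_tau[OF phi Q Q' dQ] in simp)
  have outer: "scomp C (coh C Q Q') (?Z, ?YY, scls C ?Z ?YY (?tQ, plM C f g, ?sZ))
      = (?Z, ?W, scls C ?Z ?W (?sW, cmp C (ide C ?SQ) (cmp C (brk C ?tQ ?tQ ?YY) (plM C f g)), ?sZ))"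
    unfolding coh_def
    by (rule scomp_eq[OF okZ okYY okW rin coh_rep(1)[OF phi Q Q' dQ] scls_self[OF okZ okYY rin] coh_rep(2)[OF phi Q Q' dQ]])
  have s2: "cmp C (ide C ?SQ) (cmp C (brk C ?tQ ?tQ ?YY) (plM C f g)) = plM C f g"
    using brk_id[OF i_tau[OF phi Q Q' dQ] okYY] pstar_tau[OF phi Q Q' dQ] cmp_ide_l[OF SPO SQO hfg] by simp
  have rfin: "rep_ok C ?Z ?W (?sW, plM C f g, ?sZ)"
    by (rule rep_okI[OF iZ[OF phi P P' dP] iZ[OF phi Q Q' dQ]]) (use hfg pstar_S[OF PPo] pstar_S[OF QQ] in simp)
  have "tplM C a b = (tplO P P', tplO Q Q', scomp C (coh C Q Q') (scomp C (stensor C (tens P, tens Q, scls C (tens P) (tens Q) t1)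
        (tens P', tens Q', scls C (tens P') (tens Q') t2)) (cohinv C P P')))"
    unfolding tplM_def e1 e2 by simp
  also have "\<dots> = (tplO P P', tplO Q Q', ?Z, ?W, scls C ?Z ?W (?sW, plM C f g, ?sZ))"
    unfolding st inner s1 outer s2 by simp
  finally have "S_mor C \<phi> (tplM C a b) = S_mor C \<phi> (tplO P P', tplO Q Q', ?Z, ?W, scls C ?Z ?W (?sW, plM C f g, ?sZ))" by simp
  also have "\<dots> = plM C f g" by (rule S_mor_eq[OF phi PPo QQ rfin scls_self[OF okZ okW rfin]])
  finally show ?thesis unfolding f_def g_def .
qed

lemma part3:
  assumes phi: "inj (\<lambda>(i, x). \<phi> i x)"
  shows "preserves_sums (Theta C) tsupp C (supp C) (S_obj C \<phi>) (S_mor C \<phi>)"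
  unfolding preserves_sums_def
proof (intro conjI ballI impI)
  show "S_obj C \<phi> (zro (Theta C)) = zro C"
    unfolding Theta_simps S_obj_def tsupp_def by simp
next
  fix X Y assume X: "X \<in> Ob (Theta C)" and Y: "Y \<in> Ob (Theta C)" and d: "tsupp X \<inter> tsupp Y = {}"
  have X': "theta_obj C X" and Y': "theta_obj C Y" using X Y unfolding Theta_simps by auto
  show "supp C (S_obj C \<phi> X) \<inter> supp C (S_obj C \<phi> Y) = {}"
    using obj_sum(2)[OF phi X' Y' d] unfolding disj_def .
  show "S_obj C \<phi> (plO (Theta C) X Y) = plO C (S_obj C \<phi> X) (S_obj C \<phi> Y)"
    unfolding Theta_simps by (rule obj_sum(1)[OF phi X' Y' d])
next
  fix X Y X' Y' f g assume X: "X \<in> Ob (Theta C)" and Y: "Y \<in> Ob (Theta C)" and X': "X' \<in> Ob (Theta C)" and Y': "Y' \<in> Ob (Theta C)"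
    and f: "f \<in> Hom (Theta C) X Y" and g: "g \<in> Hom (Theta C) X' Y'"
    and dX: "tsupp X \<inter> tsupp X' = {}" and dY: "tsupp Y \<inter> tsupp Y' = {}"
  show "S_mor C \<phi> (plM (Theta C) f g) = plM C (S_mor C \<phi> f) (S_mor C \<phi> g)"
    unfolding Theta_simps
    by (rule mor_sum[OF phi _ _ _ _ dX dY f g]) (use X Y X' Y' in \<open>auto simp: Theta_simps\<close>)
qed

end

theorem proposition3p22:
  fixes C :: "('o,'m,'z) pcat_scheme" and \<phi> :: "nat \<Rightarrow> nat \<Rightarrow> nat"
  assumes "parsummable C"
    and "inj (\<lambda>(i, x). \<phi> i x)"
  shows "(\<forall>P\<in>Ob (Theta C). \<forall>Q\<in>Ob (Theta C). \<forall>a\<in>Hom (Theta C) P Q.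
            case a of (P, Q, (Xs, Ys, \<alpha>)) \<Rightarrow>
              \<exists>!f. (S_rep_src \<phi> Q, f, S_rep_src \<phi> P) \<in> \<alpha>)
       \<and> is_functor (Theta C) C (S_obj C \<phi>) (S_mor C \<phi>)
       \<and> preserves_sums (Theta C) tsupp C (supp C) (S_obj C \<phi>) (S_mor C \<phi>)"
proof -
  interpret psc C by (rule psc.intro[OF assms(1)])
  show ?thesis using part1[OF assms(2)] part2[OF assms(2)] part3[OF assms(2)] by blast
qed


end
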